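(* Let $\mathcal{E}$ be the variety of loops described in the context, let $n\ge3$, let $\mathcal{F}_n\in\mathcal{E}$ be the free loop of $\mathcal{E}$ on $n$ generators, and let $M_3$ be the free loop of $\mathcal{E}$ on $3$ generators (the free code loop with 3 generators). Then $\mathcal{F}_n$ can be embedded (by an injective loop homomorphism) in a direct product of copies of $M_3$.
   Context: A loop is a set with a binary operation $xy$ such that any two of $x,y,z$ in $xy=z$ determine the third uniquely, and with a two-sided identity $1$. It is Moufang if $((xy)x)z=x(y(xz))$ for all $x,y,z$. The loop commutator $[x,y]$ is the unique element with $xy=(yx)[x,y]$, and the associator $(x,y,z)$ the unique element with $(xy)z=(x(yz))(x,y,z)$. $\mathcal{E}$ is the variety of Moufang loops satisfying the identities $x^4=1$, $[x,y]^2=1$, $(x,y,z)^2=1$, $[x^2,y]=1$, $[[x,y],t]=1$, $[(x,y,z),t]=1$, $(x^2,y,z)=1$, $([x,y],z,t)=1$, $((x,y,z),t,s)=1$; it is the variety generated by all code loops (Moufang loops $L$ with a central subgroup $A$ of order 2 such that $L/A$ is an elementary abelian 2-group). *)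

theory Defs
  imports "HOL-Library.FuncSet"
begin

record 'a loop =
  lcarrier :: "'a set"
  lmult :: "'a \<Rightarrow> 'a \<Rightarrow> 'a"
  lone :: 'a

definition is_loop :: "'a loop \<Rightarrow> bool" where
  "is_loop L \<longleftrightarrow>
     lone L \<in> lcarrier L \<and>
     (\<forall>x\<in>lcarrier L. \<forall>y\<in>lcarrier L. lmult L x y \<in> lcarrier L) \<and>
     (\<forall>x\<in>lcarrier L. lmult L (lone L) x = x \<and> lmult L x (lone L) = x) \<and>
     (\<forall>a\<in>lcarrier L. \<forall>b\<in>lcarrier L. \<exists>!x. x \<in> lcarrier L \<and> lmult L a x = b) \<and>
     (\<forall>a\<in>lcarrier L. \<forall>b\<in>lcarrier L. \<exists>!y. y \<in> lcarrier L \<and> lmult L y a = b)"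

definition is_moufang :: "'a loop \<Rightarrow> bool" where
  "is_moufang L \<longleftrightarrow> is_loop L \<and>
     (\<forall>x\<in>lcarrier L. \<forall>y\<in>lcarrier L. \<forall>z\<in>lcarrier L.
        lmult L (lmult L (lmult L x y) x) z = lmult L x (lmult L y (lmult L x z)))"

definition lldiv :: "'a loop \<Rightarrow> 'a \<Rightarrow> 'a \<Rightarrow> 'a" where
  "lldiv L a b = (THE x. x \<in> lcarrier L \<and> lmult L a x = b)"

definition lrdiv :: "'a loop \<Rightarrow> 'a \<Rightarrow> 'a \<Rightarrow> 'a" where
  "lrdiv L b a = (THE y. y \<in> lcarrier L \<and> lmult L y a = b)"

definition lcomm :: "'a loop \<Rightarrow> 'a \<Rightarrow> 'a \<Rightarrow> 'a" where
  "lcomm L x y = (THE c. c \<in> lcarrier L \<and> lmult L x y = lmult L (lmult L y x) c)"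

definition lassoc :: "'a loop \<Rightarrow> 'a \<Rightarrow> 'a \<Rightarrow> 'a \<Rightarrow> 'a" where
  "lassoc L x y z = (THE a. a \<in> lcarrier L \<and>
      lmult L (lmult L x y) z = lmult L (lmult L x (lmult L y z)) a)"

definition lsq :: "'a loop \<Rightarrow> 'a \<Rightarrow> 'a" where
  "lsq L x = lmult L x x"

definition in_E :: "'a loop \<Rightarrow> bool" where
  "in_E L \<longleftrightarrow> is_moufang L \<and>
    (\<forall>x\<in>lcarrier L. \<forall>y\<in>lcarrier L. \<forall>z\<in>lcarrier L. \<forall>t\<in>lcarrier L. \<forall>s\<in>lcarrier L.
       lmult L (lsq L x) (lsq L x) = lone L \<and>
       lsq L (lcomm L x y) = lone L \<and>
       lsq L (lassoc L x y z) = lone L \<and>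
       lcomm L (lsq L x) y = lone L \<and>
       lcomm L (lcomm L x y) t = lone L \<and>
       lcomm L (lassoc L x y z) t = lone L \<and>
       lassoc L (lsq L x) y z = lone L \<and>
       lassoc L (lcomm L x y) z t = lone L \<and>
       lassoc L (lassoc L x y z) t s = lone L)"

inductive_set lgen :: "'a loop \<Rightarrow> 'a set \<Rightarrow> 'a set" for L S where
  gen_base: "x \<in> S \<Longrightarrow> x \<in> lcarrier L \<Longrightarrow> x \<in> lgen L S"
| gen_one: "lone L \<in> lgen L S"
| gen_mult: "x \<in> lgen L S \<Longrightarrow> y \<in> lgen L S \<Longrightarrow> lmult L x y \<in> lgen L S"
| gen_ldiv: "x \<in> lgen L S \<Longrightarrow> y \<in> lgen L S \<Longrightarrow> lldiv L x y \<in> lgen L S"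
| gen_rdiv: "x \<in> lgen L S \<Longrightarrow> y \<in> lgen L S \<Longrightarrow> lrdiv L x y \<in> lgen L S"

definition loop_hom :: "'a loop \<Rightarrow> 'b loop \<Rightarrow> ('a \<Rightarrow> 'b) \<Rightarrow> bool" where
  "loop_hom L K h \<longleftrightarrow>
     (\<forall>x\<in>lcarrier L. h x \<in> lcarrier K) \<and>
     (\<forall>x\<in>lcarrier L. \<forall>y\<in>lcarrier L. h (lmult L x y) = lmult K (h x) (h y)) \<and>
     h (lone L) = lone K"

text \<open>The universal property is quantified over loops carried by nat;
  since F is generated by the g i, this is equivalent to the universal property for
  all loops of E (finitely generated loops are countable).\<close>
definition free_E_loop :: "nat \<Rightarrow> 'a loop \<Rightarrow> (nat \<Rightarrow> 'a) \<Rightarrow> bool" where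
  "free_E_loop n F g \<longleftrightarrow>
     in_E F \<and> (\<forall>i<n. g i \<in> lcarrier F) \<and>
     lgen F (g ` {..<n}) = lcarrier F \<and>
     (\<forall>(L :: nat loop) f. in_E L \<longrightarrow> (\<forall>i<n. f i \<in> lcarrier L) \<longrightarrow>
        (\<exists>h. loop_hom F L h \<and> (\<forall>i<n. h (g i) = f i)))"

definition prod_loop :: "'i set \<Rightarrow> 'b loop \<Rightarrow> ('i \<Rightarrow> 'b) loop" where
  "prod_loop I M =
     \<lparr> lcarrier = PiE I (\<lambda>_. lcarrier M),
       lmult = (\<lambda>x y. \<lambda>i\<in>I. lmult M (x i) (y i)),
       lone = (\<lambda>i\<in>I. lone M) \<rparr>"

end

theory Submission
  imports Defs "HOL-Library.Countable_Set"
begin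

locale lp =
  fixes L :: "'a loop"
  assumes isl: "is_loop L"
begin

abbreviation G where "G \<equiv> lcarrier L"
abbreviation mm (infixl "\<odot>" 70) where "x \<odot> y \<equiv> lmult L x y"
abbreviation e where "e \<equiv> lone L"
abbreviation cm where "cm \<equiv> lcomm L"
abbreviation as where "as \<equiv> lassoc L"
abbreviation sq where "sq \<equiv> lsq L"
abbreviation ld where "ld \<equiv> lldiv L"
abbreviation rd where "rd \<equiv> lrdiv L"

lemmas isl' = isl[unfolded is_loop_def]
lemma one_in[simp]: "e \<in> G" using isl' by (elim conjE)
lemma mc[simp]: "x \<in> G \<Longrightarrow> y \<in> G \<Longrightarrow> x \<odot> y \<in> G" using isl'[THEN conjunct2, THEN conjunct1] by blast
lemma lone[simp]: "x \<in> G \<Longrightarrow> e \<odot> x = x" using isl'[THEN conjunct2, THEN conjunct2, THEN conjunct1] by blast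
lemma rone[simp]: "x \<in> G \<Longrightarrow> x \<odot> e = x" using isl'[THEN conjunct2, THEN conjunct2, THEN conjunct1] by blast
lemma lex: "a \<in> G \<Longrightarrow> b \<in> G \<Longrightarrow> \<exists>!x. x \<in> G \<and> a \<odot> x = b" using isl'[THEN conjunct2, THEN conjunct2, THEN conjunct2, THEN conjunct1] by blast
lemma rex: "a \<in> G \<Longrightarrow> b \<in> G \<Longrightarrow> \<exists>!y. y \<in> G \<and> y \<odot> a = b" using isl'[THEN conjunct2, THEN conjunct2, THEN conjunct2, THEN conjunct2] by blast

lemma lcancel: "a \<in> G \<Longrightarrow> x \<in> G \<Longrightarrow> y \<in> G \<Longrightarrow> a \<odot> x = a \<odot> y \<Longrightarrow> x = y"
proof -
  assume h: "a \<in> G" "x \<in> G" "y \<in> G" "a \<odot> x = a \<odot> y"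
  show "x = y" using lex[of a "a \<odot> y"] h mc[of a y] unfolding Ex1_def by blast
qed
lemma rcancel: "a \<in> G \<Longrightarrow> x \<in> G \<Longrightarrow> y \<in> G \<Longrightarrow> x \<odot> a = y \<odot> a \<Longrightarrow> x = y"
proof -
  assume h: "a \<in> G" "x \<in> G" "y \<in> G" "x \<odot> a = y \<odot> a"
  show "x = y" using rex[of a "y \<odot> a"] h mc[of y a] unfolding Ex1_def by blast
qed

lemma ld: "a \<in> G \<Longrightarrow> b \<in> G \<Longrightarrow> ld a b \<in> G \<and> a \<odot> ld a b = b"
  unfolding lldiv_def by (rule theI', rule lex)
lemma ld_in[simp]: "a \<in> G \<Longrightarrow> b \<in> G \<Longrightarrow> ld a b \<in> G" using ld by blast
lemma ld_eq[simp]: "a \<in> G \<Longrightarrow> b \<in> G \<Longrightarrow> a \<odot> ld a b = b" using ld by blast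
lemma ld_unique: "a \<in> G \<Longrightarrow> x \<in> G \<Longrightarrow> a \<odot> x = b \<Longrightarrow> ld a b = x"
  by (metis ld lcancel mc)
lemma rd: "a \<in> G \<Longrightarrow> b \<in> G \<Longrightarrow> rd b a \<in> G \<and> rd b a \<odot> a = b"
  unfolding lrdiv_def by (rule theI', rule rex)
lemma rd_in[simp]: "a \<in> G \<Longrightarrow> b \<in> G \<Longrightarrow> rd b a \<in> G" using rd by blast
lemma rd_eq[simp]: "a \<in> G \<Longrightarrow> b \<in> G \<Longrightarrow> rd b a \<odot> a = b" using rd by blast
lemma rd_unique: "a \<in> G \<Longrightarrow> y \<in> G \<Longrightarrow> y \<odot> a = b \<Longrightarrow> rd b a = y"
  by (metis rd rcancel mc)

lemma cm: "x \<in> G \<Longrightarrow> y \<in> G \<Longrightarrow> cm x y \<in> G \<and> x \<odot> y = (y \<odot> x) \<odot> cm x y"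
proof -
  assume h: "x \<in> G" "y \<in> G"
  have "\<exists>!c. c \<in> G \<and> (y \<odot> x) \<odot> c = x \<odot> y" using h by (intro lex) simp_all
  then have "\<exists>!c. c \<in> G \<and> x \<odot> y = (y \<odot> x) \<odot> c" unfolding Ex1_def by (metis (no_types, lifting))
  from theI'[OF this] show ?thesis unfolding lcomm_def .
qed
lemma cm_in[simp]: "x \<in> G \<Longrightarrow> y \<in> G \<Longrightarrow> cm x y \<in> G" using cm by blast
lemma cm_eq: "x \<in> G \<Longrightarrow> y \<in> G \<Longrightarrow> x \<odot> y = (y \<odot> x) \<odot> cm x y" using cm by blast
lemma cm_unique: "x \<in> G \<Longrightarrow> y \<in> G \<Longrightarrow> c \<in> G \<Longrightarrow> x \<odot> y = (y \<odot> x) \<odot> c \<Longrightarrow> cm x y = c"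
  by (metis cm lcancel mc)

lemma as: "x \<in> G \<Longrightarrow> y \<in> G \<Longrightarrow> z \<in> G \<Longrightarrow> as x y z \<in> G \<and> (x \<odot> y) \<odot> z = (x \<odot> (y \<odot> z)) \<odot> as x y z"
proof -
  assume h: "x \<in> G" "y \<in> G" "z \<in> G"
  have "\<exists>!c. c \<in> G \<and> (x \<odot> (y \<odot> z)) \<odot> c = (x \<odot> y) \<odot> z" using h by (intro lex) simp_all
  then have "\<exists>!c. c \<in> G \<and> (x \<odot> y) \<odot> z = (x \<odot> (y \<odot> z)) \<odot> c" unfolding Ex1_def by (metis (no_types, lifting))
  from theI'[OF this] show ?thesis unfolding lassoc_def .
qed
lemma as_in[simp]: "x \<in> G \<Longrightarrow> y \<in> G \<Longrightarrow> z \<in> G \<Longrightarrow> as x y z \<in> G" using as by blast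
lemma as_eq: "x \<in> G \<Longrightarrow> y \<in> G \<Longrightarrow> z \<in> G \<Longrightarrow> (x \<odot> y) \<odot> z = (x \<odot> (y \<odot> z)) \<odot> as x y z" using as by blast
lemma as_unique: "x \<in> G \<Longrightarrow> y \<in> G \<Longrightarrow> z \<in> G \<Longrightarrow> c \<in> G \<Longrightarrow> (x \<odot> y) \<odot> z = (x \<odot> (y \<odot> z)) \<odot> c \<Longrightarrow> as x y z = c"
  by (metis as lcancel mc)

lemma sq_in[simp]: "x \<in> G \<Longrightarrow> sq x \<in> G" unfolding lsq_def by simp

lemma cm_one_iff: "x \<in> G \<Longrightarrow> y \<in> G \<Longrightarrow> cm x y = e \<longleftrightarrow> x \<odot> y = y \<odot> x"
  by (metis cm_unique cm_eq one_in rone mc)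
lemma as_one_iff: "x \<in> G \<Longrightarrow> y \<in> G \<Longrightarrow> z \<in> G \<Longrightarrow> as x y z = e \<longleftrightarrow> (x \<odot> y) \<odot> z = x \<odot> (y \<odot> z)"
  by (metis as_unique as_eq one_in rone mc)

lemma cm_e1[simp]: "y \<in> G \<Longrightarrow> cm e y = e" by (simp add: cm_one_iff)
lemma cm_e2[simp]: "y \<in> G \<Longrightarrow> cm y e = e" by (simp add: cm_one_iff)
lemma cm_self[simp]: "y \<in> G \<Longrightarrow> cm y y = e" by (simp add: cm_one_iff)
lemma as_e1[simp]: "y \<in> G \<Longrightarrow> z \<in> G \<Longrightarrow> as e y z = e" by (simp add: as_one_iff)
lemma as_e2[simp]: "y \<in> G \<Longrightarrow> z \<in> G \<Longrightarrow> as y e z = e" by (simp add: as_one_iff)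
lemma as_e3[simp]: "y \<in> G \<Longrightarrow> z \<in> G \<Longrightarrow> as y z e = e" by (simp add: as_one_iff)
lemma sq_e[simp]: "sq e = e" unfolding lsq_def by simp

end

locale eloop = lp +
  assumes inE: "in_E L"
begin

lemma moufang: "x \<in> G \<Longrightarrow> y \<in> G \<Longrightarrow> z \<in> G \<Longrightarrow> ((x \<odot> y) \<odot> x) \<odot> z = x \<odot> (y \<odot> (x \<odot> z))"
  using inE unfolding in_E_def is_moufang_def by blast

lemma Eax: assumes "x \<in> G" "y \<in> G" "z \<in> G" "t \<in> G" "s \<in> G"
  shows "sq x \<odot> sq x = e \<and> sq (cm x y) = e \<and> sq (as x y z) = e \<and> cm (sq x) y = e \<and>
       cm (cm x y) t = e \<and> cm (as x y z) t = e \<and> as (sq x) y z = e \<and> as (cm x y) z t = e \<and>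
       as (as x y z) t s = e"
  using inE assms unfolding in_E_def by blast

definition Zc :: "'a set" where
  "Zc = {c \<in> G. \<forall>x\<in>G. c \<odot> x = x \<odot> c \<and> (\<forall>y\<in>G. (c \<odot> x) \<odot> y = c \<odot> (x \<odot> y) \<and>
      (x \<odot> c) \<odot> y = x \<odot> (c \<odot> y) \<and> (x \<odot> y) \<odot> c = x \<odot> (y \<odot> c))}"

lemma lalt: "x \<in> G \<Longrightarrow> z \<in> G \<Longrightarrow> (x \<odot> x) \<odot> z = x \<odot> (x \<odot> z)"
  using moufang[of x e z] by simp
lemma flex: "x \<in> G \<Longrightarrow> y \<in> G \<Longrightarrow> (x \<odot> y) \<odot> x = x \<odot> (y \<odot> x)"
  using moufang[of x y e] by simp

lemma Zc_intro:
  assumes c: "c \<in> G" and cc: "\<And>x. x \<in> G \<Longrightarrow> c \<odot> x = x \<odot> c"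
    and cl: "\<And>x y. x \<in> G \<Longrightarrow> y \<in> G \<Longrightarrow> (c \<odot> x) \<odot> y = c \<odot> (x \<odot> y)"
  shows "c \<in> Zc"
proof -
  have mid: "(x \<odot> c) \<odot> w = x \<odot> (c \<odot> w)" if x: "x \<in> G" and w: "w \<in> G" for x w
  proof -
    define z where "z = ld x w"
    have z: "z \<in> G" "x \<odot> z = w" using x w by (simp_all add: z_def)
    have "((x \<odot> c) \<odot> x) \<odot> z = x \<odot> (c \<odot> (x \<odot> z))" using moufang x c z by simp
    moreover have "((x \<odot> c) \<odot> x) \<odot> z = (x \<odot> c) \<odot> w"
    proof -
      have "((x \<odot> c) \<odot> x) \<odot> z = ((c \<odot> x) \<odot> x) \<odot> z" using cc x by simp
      also have "\<dots> = (c \<odot> (x \<odot> x)) \<odot> z" using cl x by simp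
      also have "\<dots> = c \<odot> ((x \<odot> x) \<odot> z)" using cl x z(1) by simp
      also have "\<dots> = c \<odot> (x \<odot> (x \<odot> z))" using lalt x z(1) by simp
      also have "\<dots> = (c \<odot> x) \<odot> (x \<odot> z)" using cl[of x "x \<odot> z"] x z(1) by simp
      also have "\<dots> = (x \<odot> c) \<odot> w" using cc x z by simp
      finally show ?thesis .
    qed
    ultimately show ?thesis using z by simp
  qed
  have right: "(x \<odot> y) \<odot> c = x \<odot> (y \<odot> c)" if x: "x \<in> G" and y: "y \<in> G" for x y
  proof -
    have "(x \<odot> y) \<odot> c = c \<odot> (x \<odot> y)" using cc x y by simp
    also have "\<dots> = (c \<odot> x) \<odot> y" using cl x y by simp
    also have "\<dots> = (x \<odot> c) \<odot> y" using cc x by simp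
    also have "\<dots> = x \<odot> (c \<odot> y)" using mid x y by simp
    also have "\<dots> = x \<odot> (y \<odot> c)" using cc y by simp
    finally show ?thesis .
  qed
  show ?thesis unfolding Zc_def using c cc cl mid right by blast
qed

lemma Zc_G[simp]: "c \<in> Zc \<Longrightarrow> c \<in> G" unfolding Zc_def by blast
lemma zc_comm: "c \<in> Zc \<Longrightarrow> x \<in> G \<Longrightarrow> c \<odot> x = x \<odot> c" unfolding Zc_def by blast
lemma zc_l: "c \<in> Zc \<Longrightarrow> x \<in> G \<Longrightarrow> y \<in> G \<Longrightarrow> (c \<odot> x) \<odot> y = c \<odot> (x \<odot> y)" unfolding Zc_def by blast
lemma zc_m: "c \<in> Zc \<Longrightarrow> x \<in> G \<Longrightarrow> y \<in> G \<Longrightarrow> (x \<odot> c) \<odot> y = x \<odot> (c \<odot> y)" unfolding Zc_def by blast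
lemma zc_r: "c \<in> Zc \<Longrightarrow> x \<in> G \<Longrightarrow> y \<in> G \<Longrightarrow> (x \<odot> y) \<odot> c = x \<odot> (y \<odot> c)" unfolding Zc_def by blast

lemma Zc_e[simp]: "e \<in> Zc" by (rule Zc_intro) simp_all

lemma Zc_mult[simp]: assumes c: "c \<in> Zc" and d: "d \<in> Zc" shows "c \<odot> d \<in> Zc"
proof (rule Zc_intro)
  show "c \<odot> d \<in> G" using c d by simp
  fix x assume x: "x \<in> G"
  show "(c \<odot> d) \<odot> x = x \<odot> (c \<odot> d)"
    by (metis Zc_G c d x zc_comm zc_l zc_m)
  fix y assume y: "y \<in> G"
  show "(c \<odot> d) \<odot> x \<odot> y = (c \<odot> d) \<odot> (x \<odot> y)"
    by (metis Zc_G c d x y mc zc_l)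
qed

lemma sq_Zc[simp]: assumes x: "x \<in> G" shows "sq x \<in> Zc"
proof (rule Zc_intro)
  show "sq x \<in> G" using x by simp
  fix y assume y: "y \<in> G"
  have h: "cm (sq x) y = e" using Eax[of x y e e e] x y one_in by blast
  show "sq x \<odot> y = y \<odot> sq x" using h cm_one_iff[of "sq x" y] x y sq_in by blast
  fix z assume z: "z \<in> G"
  have h: "as (sq x) y z = e" using Eax[of x y z e e] x y z one_in by blast
  show "(sq x \<odot> y) \<odot> z = sq x \<odot> (y \<odot> z)" using h as_one_iff[of "sq x" y z] x y z sq_in by blast
qed
lemma cm_Zc[simp]: assumes x: "x \<in> G" and w: "w \<in> G" shows "cm x w \<in> Zc"
proof (rule Zc_intro)
  show "cm x w \<in> G" using x w by simp
  fix y assume y: "y \<in> G"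
  have h: "cm (cm x w) y = e" using Eax[of x w e y e] x y w one_in by blast
  show "cm x w \<odot> y = y \<odot> cm x w" using h cm_one_iff[of "cm x w" y] x y w cm_in by blast
  fix z assume z: "z \<in> G"
  have h: "as (cm x w) y z = e" using Eax[of x w y z e] x y z w one_in by blast
  show "(cm x w \<odot> y) \<odot> z = cm x w \<odot> (y \<odot> z)" using h as_one_iff[of "cm x w" y z] x y z w cm_in by blast
qed
lemma as_Zc[simp]: assumes x: "x \<in> G" and w: "w \<in> G" and v: "v \<in> G" shows "as x w v \<in> Zc"
proof (rule Zc_intro)
  show "as x w v \<in> G" using x w v by simp
  fix y assume y: "y \<in> G"
  have h: "cm (as x w v) y = e" using Eax[of x w v y e] x y w v one_in by blast
  show "as x w v \<odot> y = y \<odot> as x w v" using h cm_one_iff[of "as x w v" y] x y w v as_in by blast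
  fix z assume z: "z \<in> G"
  have h: "as (as x w v) y z = e" using Eax[of x w v y z] x y z w v one_in by blast
  show "(as x w v \<odot> y) \<odot> z = as x w v \<odot> (y \<odot> z)" using h as_one_iff[of "as x w v" y z] x y z w v as_in by blast
qed

definition Zi :: "'a set" where "Zi = {c \<in> Zc. c \<odot> c = e}"

lemma Zi_Zc[simp]: "c \<in> Zi \<Longrightarrow> c \<in> Zc" unfolding Zi_def by simp
lemma Zi_G[simp]: "c \<in> Zi \<Longrightarrow> c \<in> G" unfolding Zi_def by simp
lemma Zi_inv[simp]: "c \<in> Zi \<Longrightarrow> c \<odot> c = e" unfolding Zi_def by simp
lemma Zi_e[simp]: "e \<in> Zi" unfolding Zi_def by simp

lemma zc_assoc: "c \<in> Zc \<Longrightarrow> x \<in> G \<Longrightarrow> y \<in> G \<Longrightarrow> (x \<odot> c) \<odot> y = (x \<odot> y) \<odot> c"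
  by (metis zc_m zc_r zc_comm)
lemma zc_assoc2: "c \<in> Zc \<Longrightarrow> x \<in> G \<Longrightarrow> y \<in> G \<Longrightarrow> x \<odot> (y \<odot> c) = (x \<odot> y) \<odot> c"
  by (metis zc_r)
lemma zc_assoc3: "c \<in> Zc \<Longrightarrow> d \<in> Zc \<Longrightarrow> x \<in> G \<Longrightarrow> (x \<odot> c) \<odot> d = x \<odot> (c \<odot> d)"
  by (metis zc_r Zc_G)
lemma zc_AC: "c \<in> Zc \<Longrightarrow> d \<in> Zc \<Longrightarrow> c \<odot> d = d \<odot> c"
  by (metis zc_comm Zc_G)
lemma zc_AC2: "c \<in> Zc \<Longrightarrow> d \<in> Zc \<Longrightarrow> f \<in> Zc \<Longrightarrow> (c \<odot> d) \<odot> f = c \<odot> (d \<odot> f)"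
  by (metis zc_l Zc_G)
lemma zc_AC3: "c \<in> Zc \<Longrightarrow> d \<in> Zc \<Longrightarrow> f \<in> Zc \<Longrightarrow> c \<odot> (d \<odot> f) = d \<odot> (c \<odot> f)"
  by (metis zc_AC zc_AC2)
lemma zi_cancel: "c \<in> Zi \<Longrightarrow> d \<in> Zc \<Longrightarrow> c \<odot> (c \<odot> d) = d"
  by (metis zc_AC2 Zi_Zc Zi_inv lone Zc_G)

lemma Zi_mult[simp]: "c \<in> Zi \<Longrightarrow> d \<in> Zi \<Longrightarrow> c \<odot> d \<in> Zi"
  unfolding Zi_def by (simp, metis zc_AC zc_AC2 zc_AC3 Zc_G rone Zc_mult)

lemma sq_Zi[simp]: "x \<in> G \<Longrightarrow> sq x \<in> Zi" unfolding Zi_def using Eax[of x e e e e] by simp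
lemma cm_Zi[simp]: "x \<in> G \<Longrightarrow> y \<in> G \<Longrightarrow> cm x y \<in> Zi" unfolding Zi_def using Eax[of x y e e e] by (simp add: lsq_def)
lemma as_Zi[simp]: "x \<in> G \<Longrightarrow> y \<in> G \<Longrightarrow> z \<in> G \<Longrightarrow> as x y z \<in> Zi" unfolding Zi_def using Eax[of x y z e e] by (simp add: lsq_def)

end

context eloop begin

lemmas zac = zc_AC zc_AC2 zc_AC3 zi_cancel

lemma zi_eq: "c \<in> Zi \<Longrightarrow> d \<in> Zi \<Longrightarrow> c \<odot> d = e \<Longrightarrow> c = d"
  by (metis zc_AC2 Zi_Zc Zi_inv lone Zc_G rone)

lemma P_cancel: "P \<in> G \<Longrightarrow> c \<in> G \<Longrightarrow> d \<in> G \<Longrightarrow> P \<odot> c = P \<odot> d \<Longrightarrow> c = d"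
  by (rule lcancel)

lemma rcancel_sym: "x \<odot> a = y \<odot> a \<Longrightarrow> a \<in> G \<Longrightarrow> x \<in> G \<Longrightarrow> y \<in> G \<Longrightarrow> y = x"
  using rcancel by metis

lemma cocycle:
  assumes x: "x \<in> G" and y: "y \<in> G" and z: "z \<in> G" and w: "w \<in> G"
  shows "as (x \<odot> y) z w \<odot> as x y (z \<odot> w) = as x y z \<odot> (as x (y \<odot> z) w \<odot> as y z w)"
proof -
  let ?P = "x \<odot> (y \<odot> (z \<odot> w))"
  have 1: "((x \<odot> y) \<odot> z) \<odot> w = ?P \<odot> (as y z w \<odot> (as x (y \<odot> z) w \<odot> as x y z))"
  proof -
    have "((x \<odot> y) \<odot> z) \<odot> w = ((x \<odot> (y \<odot> z)) \<odot> as x y z) \<odot> w" using as_eq[of x y z] x y z by simp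
    also have "\<dots> = ((x \<odot> (y \<odot> z)) \<odot> w) \<odot> as x y z" using zc_assoc[of "as x y z" "x \<odot> (y \<odot> z)" w] x y z w by simp
    also have "\<dots> = ((x \<odot> ((y \<odot> z) \<odot> w)) \<odot> as x (y \<odot> z) w) \<odot> as x y z" using as_eq[of x "y \<odot> z" w] x y z w by simp
    also have "\<dots> = (x \<odot> ((y \<odot> z) \<odot> w)) \<odot> (as x (y \<odot> z) w \<odot> as x y z)" using zc_assoc3[of "as x (y \<odot> z) w" "as x y z" "x \<odot> ((y \<odot> z) \<odot> w)"] x y z w by simp
    also have "\<dots> = (x \<odot> ((y \<odot> (z \<odot> w)) \<odot> as y z w)) \<odot> (as x (y \<odot> z) w \<odot> as x y z)" using as_eq[of y z w] y z w by simp
    also have "\<dots> = (?P \<odot> as y z w) \<odot> (as x (y \<odot> z) w \<odot> as x y z)" using zc_assoc2[of "as y z w" x "y \<odot> (z \<odot> w)"] x y z w by simp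
    also have "\<dots> = ?P \<odot> (as y z w \<odot> (as x (y \<odot> z) w \<odot> as x y z))" using zc_assoc3[of "as y z w" "as x (y \<odot> z) w \<odot> as x y z" ?P] x y z w by simp
    finally show ?thesis .
  qed
  have 2: "((x \<odot> y) \<odot> z) \<odot> w = ?P \<odot> (as x y (z \<odot> w) \<odot> as (x \<odot> y) z w)"
  proof -
    have "((x \<odot> y) \<odot> z) \<odot> w = ((x \<odot> y) \<odot> (z \<odot> w)) \<odot> as (x \<odot> y) z w" using as_eq[of "x \<odot> y" z w] x y z w by simp
    also have "\<dots> = (?P \<odot> as x y (z \<odot> w)) \<odot> as (x \<odot> y) z w" using as_eq[of x y "z \<odot> w"] x y z w by simp
    also have "\<dots> = ?P \<odot> (as x y (z \<odot> w) \<odot> as (x \<odot> y) z w)" using zc_assoc3[of "as x y (z \<odot> w)" "as (x \<odot> y) z w" ?P] x y z w by simp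
    finally show ?thesis .
  qed
  have "?P \<odot> (as y z w \<odot> (as x (y \<odot> z) w \<odot> as x y z)) = ?P \<odot> (as x y (z \<odot> w) \<odot> as (x \<odot> y) z w)"
    using 1 2 by (rule trans[OF sym])
  then have "as y z w \<odot> (as x (y \<odot> z) w \<odot> as x y z) = as x y (z \<odot> w) \<odot> as (x \<odot> y) z w"
    by (rule P_cancel[rotated 3]) (use x y z w in simp_all)
  then show ?thesis using x y z w by (simp add: zac)
qed


lemma as_flex[simp]: "x \<in> G \<Longrightarrow> y \<in> G \<Longrightarrow> as x y x = e"
  using flex as_one_iff by simp
lemma as_lalt[simp]: "x \<in> G \<Longrightarrow> y \<in> G \<Longrightarrow> as x x y = e"
  using lalt as_one_iff by simp

lemma as_M: assumes x: "x \<in> G" and y: "y \<in> G" and z: "z \<in> G"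
  shows "as (x \<odot> y) x z = as x y (x \<odot> z)"
proof -
  let ?P = "x \<odot> (y \<odot> (x \<odot> z))"
  have "((x \<odot> y) \<odot> x) \<odot> z = ((x \<odot> y) \<odot> (x \<odot> z)) \<odot> as (x \<odot> y) x z" using as_eq[of "x \<odot> y" x z] x y z by simp
  also have "\<dots> = (?P \<odot> as x y (x \<odot> z)) \<odot> as (x \<odot> y) x z" using as_eq[of x y "x \<odot> z"] x y z by simp
  also have "\<dots> = ?P \<odot> (as x y (x \<odot> z) \<odot> as (x \<odot> y) x z)" using zc_assoc3[of "as x y (x \<odot> z)" "as (x \<odot> y) x z" ?P] x y z by simp
  finally have "?P \<odot> (as x y (x \<odot> z) \<odot> as (x \<odot> y) x z) = ?P \<odot> e" using moufang[of x y z] x y z by simp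
  then have "as x y (x \<odot> z) \<odot> as (x \<odot> y) x z = e" by (rule P_cancel[rotated 3]) (use x y z in simp_all)
  then show ?thesis using zi_eq x y z by (metis as_Zi mc)
qed

lemma as_c1: assumes c: "c \<in> Zc" and x: "x \<in> G" and y: "y \<in> G" and z: "z \<in> G"
  shows "as (x \<odot> c) y z = as x y z"
proof -
  let ?P = "x \<odot> (y \<odot> z)"
  have cG: "c \<in> G" using c by simp
  have "((x \<odot> c) \<odot> y) \<odot> z = ((x \<odot> y) \<odot> c) \<odot> z" using zc_assoc[of c x y] c x y by simp
  also have "\<dots> = ((x \<odot> y) \<odot> z) \<odot> c" using zc_assoc[of c "x \<odot> y" z] c x y z by simp
  also have "\<dots> = (?P \<odot> as x y z) \<odot> c" using as_eq[of x y z] x y z by simp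
  also have "\<dots> = ?P \<odot> (as x y z \<odot> c)" using zc_assoc3[of "as x y z" c ?P] c x y z by simp
  finally have 1: "((x \<odot> c) \<odot> y) \<odot> z = ?P \<odot> (as x y z \<odot> c)" .
  have "((x \<odot> c) \<odot> y) \<odot> z = ((x \<odot> c) \<odot> (y \<odot> z)) \<odot> as (x \<odot> c) y z" using as_eq[of "x \<odot> c" y z] cG x y z by simp
  also have "\<dots> = (?P \<odot> c) \<odot> as (x \<odot> c) y z" using zc_assoc[of c x "y \<odot> z"] c x y z by simp
  also have "\<dots> = ?P \<odot> (c \<odot> as (x \<odot> c) y z)" using zc_assoc3[of c "as (x \<odot> c) y z" ?P] cG c x y z by simp
  finally have "?P \<odot> (as x y z \<odot> c) = ?P \<odot> (c \<odot> as (x \<odot> c) y z)" using 1 by simp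
  then have "as x y z \<odot> c = c \<odot> as (x \<odot> c) y z" by (rule P_cancel[rotated 3]) (use cG x y z in simp_all)
  then have "as x y z \<odot> c = as (x \<odot> c) y z \<odot> c" using zc_AC[of c "as (x \<odot> c) y z"] c cG x y z by simp
  then show ?thesis by (rule rcancel_sym) (use cG x y z in simp_all)
qed

lemma as_c2: assumes c: "c \<in> Zc" and x: "x \<in> G" and y: "y \<in> G" and z: "z \<in> G"
  shows "as x (y \<odot> c) z = as x y z"
proof -
  let ?P = "x \<odot> (y \<odot> z)"
  have cG: "c \<in> G" using c by simp
  have "(x \<odot> (y \<odot> c)) \<odot> z = ((x \<odot> y) \<odot> c) \<odot> z" using zc_assoc2[of c x y] c x y by simp
  also have "\<dots> = ((x \<odot> y) \<odot> z) \<odot> c" using zc_assoc[of c "x \<odot> y" z] c x y z by simp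
  also have "\<dots> = (?P \<odot> as x y z) \<odot> c" using as_eq[of x y z] x y z by simp
  also have "\<dots> = ?P \<odot> (as x y z \<odot> c)" using zc_assoc3[of "as x y z" c ?P] c x y z by simp
  finally have 1: "(x \<odot> (y \<odot> c)) \<odot> z = ?P \<odot> (as x y z \<odot> c)" .
  have "(x \<odot> (y \<odot> c)) \<odot> z = (x \<odot> ((y \<odot> c) \<odot> z)) \<odot> as x (y \<odot> c) z" using as_eq[of x "y \<odot> c" z] cG x y z by simp
  also have "\<dots> = (x \<odot> ((y \<odot> z) \<odot> c)) \<odot> as x (y \<odot> c) z" using zc_assoc[of c y z] c y z by simp
  also have "\<dots> = (?P \<odot> c) \<odot> as x (y \<odot> c) z" using zc_assoc2[of c x "y \<odot> z"] c x y z by simp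
  also have "\<dots> = ?P \<odot> (c \<odot> as x (y \<odot> c) z)" using zc_assoc3[of c "as x (y \<odot> c) z" ?P] cG c x y z by simp
  finally have "?P \<odot> (as x y z \<odot> c) = ?P \<odot> (c \<odot> as x (y \<odot> c) z)" using 1 by simp
  then have "as x y z \<odot> c = c \<odot> as x (y \<odot> c) z" by (rule P_cancel[rotated 3]) (use cG x y z in simp_all)
  then have "as x y z \<odot> c = as x (y \<odot> c) z \<odot> c" using zc_AC[of c "as x (y \<odot> c) z"] c cG x y z by simp
  then show ?thesis by (rule rcancel_sym) (use cG x y z in simp_all)
qed

lemma as_c3: assumes c: "c \<in> Zc" and x: "x \<in> G" and y: "y \<in> G" and z: "z \<in> G"
  shows "as x y (z \<odot> c) = as x y z"
proof -
  let ?P = "x \<odot> (y \<odot> z)"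
  have cG: "c \<in> G" using c by simp
  have "(x \<odot> y) \<odot> (z \<odot> c) = ((x \<odot> y) \<odot> z) \<odot> c" using zc_assoc2[of c "x \<odot> y" z] c x y z by simp
  also have "\<dots> = (?P \<odot> as x y z) \<odot> c" using as_eq[of x y z] x y z by simp
  also have "\<dots> = ?P \<odot> (as x y z \<odot> c)" using zc_assoc3[of "as x y z" c ?P] c x y z by simp
  finally have 1: "(x \<odot> y) \<odot> (z \<odot> c) = ?P \<odot> (as x y z \<odot> c)" .
  have "(x \<odot> y) \<odot> (z \<odot> c) = (x \<odot> (y \<odot> (z \<odot> c))) \<odot> as x y (z \<odot> c)" using as_eq[of x y "z \<odot> c"] cG x y z by simp
  also have "\<dots> = (x \<odot> ((y \<odot> z) \<odot> c)) \<odot> as x y (z \<odot> c)" using zc_assoc2[of c y z] c y z by simp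
  also have "\<dots> = (?P \<odot> c) \<odot> as x y (z \<odot> c)" using zc_assoc2[of c x "y \<odot> z"] c x y z by simp
  also have "\<dots> = ?P \<odot> (c \<odot> as x y (z \<odot> c))" using zc_assoc3[of c "as x y (z \<odot> c)" ?P] cG c x y z by simp
  finally have "?P \<odot> (as x y z \<odot> c) = ?P \<odot> (c \<odot> as x y (z \<odot> c))" using 1 by simp
  then have "as x y z \<odot> c = c \<odot> as x y (z \<odot> c)" by (rule P_cancel[rotated 3]) (use cG x y z in simp_all)
  then have "as x y z \<odot> c = as x y (z \<odot> c) \<odot> c" using zc_AC[of c "as x y (z \<odot> c)"] c cG x y z by simp
  then show ?thesis by (rule rcancel_sym) (use cG x y z in simp_all)
qed

lemma cm_c1: assumes c: "c \<in> Zc" and x: "x \<in> G" and y: "y \<in> G"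
  shows "cm (x \<odot> c) y = cm x y"
proof -
  have cG: "c \<in> G" using c by simp
  have "(x \<odot> c) \<odot> y = (x \<odot> y) \<odot> c" using zc_assoc[of c x y] c x y by simp
  also have "\<dots> = ((y \<odot> x) \<odot> cm x y) \<odot> c" using cm_eq[of x y] x y by simp
  also have "\<dots> = (y \<odot> x) \<odot> (cm x y \<odot> c)" using zc_assoc3[of "cm x y" c "y \<odot> x"] c x y by simp
  finally have 1: "(x \<odot> c) \<odot> y = (y \<odot> x) \<odot> (cm x y \<odot> c)" .
  have "(x \<odot> c) \<odot> y = (y \<odot> (x \<odot> c)) \<odot> cm (x \<odot> c) y" using cm_eq[of "x \<odot> c" y] cG x y by simp
  also have "\<dots> = ((y \<odot> x) \<odot> c) \<odot> cm (x \<odot> c) y" using zc_assoc2[of c y x] c x y by simp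
  also have "\<dots> = (y \<odot> x) \<odot> (c \<odot> cm (x \<odot> c) y)" using zc_assoc3[of c "cm (x \<odot> c) y" "y \<odot> x"] cG c x y by simp
  finally have "(y \<odot> x) \<odot> (cm x y \<odot> c) = (y \<odot> x) \<odot> (c \<odot> cm (x \<odot> c) y)" using 1 by simp
  then have "cm x y \<odot> c = c \<odot> cm (x \<odot> c) y" by (rule P_cancel[rotated 3]) (use cG x y in simp_all)
  then have "cm x y \<odot> c = cm (x \<odot> c) y \<odot> c" using zc_AC[of c "cm (x \<odot> c) y"] c cG x y by simp
  then show ?thesis by (rule rcancel_sym) (use cG x y in simp_all)
qed

lemma cm_c2: assumes c: "c \<in> Zc" and x: "x \<in> G" and y: "y \<in> G"
  shows "cm x (y \<odot> c) = cm x y"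
proof -
  have cG: "c \<in> G" using c by simp
  have "x \<odot> (y \<odot> c) = (x \<odot> y) \<odot> c" using zc_assoc2[of c x y] c x y by simp
  also have "\<dots> = ((y \<odot> x) \<odot> cm x y) \<odot> c" using cm_eq[of x y] x y by simp
  also have "\<dots> = (y \<odot> x) \<odot> (cm x y \<odot> c)" using zc_assoc3[of "cm x y" c "y \<odot> x"] c x y by simp
  finally have 1: "x \<odot> (y \<odot> c) = (y \<odot> x) \<odot> (cm x y \<odot> c)" .
  have "x \<odot> (y \<odot> c) = ((y \<odot> c) \<odot> x) \<odot> cm x (y \<odot> c)" using cm_eq[of x "y \<odot> c"] cG x y by simp
  also have "\<dots> = ((y \<odot> x) \<odot> c) \<odot> cm x (y \<odot> c)" using zc_assoc[of c y x] c x y by simp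
  also have "\<dots> = (y \<odot> x) \<odot> (c \<odot> cm x (y \<odot> c))" using zc_assoc3[of c "cm x (y \<odot> c)" "y \<odot> x"] cG c x y by simp
  finally have "(y \<odot> x) \<odot> (cm x y \<odot> c) = (y \<odot> x) \<odot> (c \<odot> cm x (y \<odot> c))" using 1 by simp
  then have "cm x y \<odot> c = c \<odot> cm x (y \<odot> c)" by (rule P_cancel[rotated 3]) (use cG x y in simp_all)
  then have "cm x y \<odot> c = cm x (y \<odot> c) \<odot> c" using zc_AC[of c "cm x (y \<odot> c)"] c cG x y by simp
  then show ?thesis by (rule rcancel_sym) (use cG x y in simp_all)
qed

end

context eloop begin

lemma as_z1: "c \<in> Zc \<Longrightarrow> y \<in> G \<Longrightarrow> z \<in> G \<Longrightarrow> as c y z = e"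
  using as_c1[of c e y z] by simp
lemma as_z2: "c \<in> Zc \<Longrightarrow> x \<in> G \<Longrightarrow> z \<in> G \<Longrightarrow> as x c z = e"
  using as_c2[of c x e z] by simp
lemma as_z3: "c \<in> Zc \<Longrightarrow> x \<in> G \<Longrightarrow> y \<in> G \<Longrightarrow> as x y c = e"
  using as_c3[of c x y e] by simp
lemma cm_z1: "c \<in> Zc \<Longrightarrow> y \<in> G \<Longrightarrow> cm c y = e"
  using cm_c1[of c e y] by simp
lemma cm_z2: "c \<in> Zc \<Longrightarrow> y \<in> G \<Longrightarrow> cm y c = e"
  using cm_c2[of c y e] by simp

lemma as_c1': "c \<in> Zc \<Longrightarrow> x \<in> G \<Longrightarrow> y \<in> G \<Longrightarrow> z \<in> G \<Longrightarrow> as (c \<odot> x) y z = as x y z"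
  using as_c1[of c x y z] zc_comm[of c x] by simp
lemma as_c2': "c \<in> Zc \<Longrightarrow> x \<in> G \<Longrightarrow> y \<in> G \<Longrightarrow> z \<in> G \<Longrightarrow> as x (c \<odot> y) z = as x y z"
  using as_c2[of c x y z] zc_comm[of c y] by simp
lemma as_c3': "c \<in> Zc \<Longrightarrow> x \<in> G \<Longrightarrow> y \<in> G \<Longrightarrow> z \<in> G \<Longrightarrow> as x y (c \<odot> z) = as x y z"
  using as_c3[of c x y z] zc_comm[of c z] by simp

lemma swap_eq: "x \<in> G \<Longrightarrow> y \<in> G \<Longrightarrow> y \<odot> x = (x \<odot> y) \<odot> cm y x"
  by (rule cm_eq)

lemma as_sw1: "x \<in> G \<Longrightarrow> y \<in> G \<Longrightarrow> z \<in> G \<Longrightarrow> w \<in> G \<Longrightarrow> as (y \<odot> x) z w = as (x \<odot> y) z w"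
  using swap_eq[of x y] as_c1[of "cm y x" "x \<odot> y" z w] by simp
lemma as_sw2: "x \<in> G \<Longrightarrow> y \<in> G \<Longrightarrow> z \<in> G \<Longrightarrow> w \<in> G \<Longrightarrow> as z (y \<odot> x) w = as z (x \<odot> y) w"
  using swap_eq[of x y] as_c2[of "cm y x" z "x \<odot> y" w] by simp
lemma as_sw3: "x \<in> G \<Longrightarrow> y \<in> G \<Longrightarrow> z \<in> G \<Longrightarrow> w \<in> G \<Longrightarrow> as z w (y \<odot> x) = as z w (x \<odot> y)"
  using swap_eq[of x y] as_c3[of "cm y x" z w "x \<odot> y"] by simp

lemma sq_eq: "x \<in> G \<Longrightarrow> x \<odot> x = sq x" by (simp add: lsq_def)

lemma as_ralt[simp]: assumes x: "x \<in> G" and y: "y \<in> G" shows "as y x x = e"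
proof -
  have 1: "as (x \<odot> y) x x \<odot> as x y (x \<odot> x) = as x y x \<odot> (as x (y \<odot> x) x \<odot> as y x x)"
    using cocycle[of x y x x] x y by simp
  have 2: "as x y (x \<odot> x) = e" using as_z3[of "sq x" x y] x y by (simp add: sq_eq)
  have 3: "as (x \<odot> y) x x = e" using as_M[of x y x] 2 x y by simp
  show ?thesis using 1 2 3 x y by simp
qed

lemma as_A: assumes x: "x \<in> G" and y: "y \<in> G" and z: "z \<in> G"
  shows "as x (x \<odot> y) z = as x y z"
proof -
  have 1: "as (x \<odot> x) y z \<odot> as x x (y \<odot> z) = as x x y \<odot> (as x (x \<odot> y) z \<odot> as x y z)"
    using cocycle[of x x y z] x y z by simp
  have 2: "as (x \<odot> x) y z = e" using as_z1[of "sq x" y z] x y z by (simp add: sq_eq)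
  have "as x (x \<odot> y) z \<odot> as x y z = e" using 1 2 x y z by simp
  then show ?thesis using zi_eq x y z by (metis as_Zi mc)
qed

lemma as_sym12: assumes x: "x \<in> G" and y: "y \<in> G" and z: "z \<in> G"
  shows "as y x z = as x y z"
proof -
  have 1: "as (x \<odot> y) x z \<odot> as x y (x \<odot> z) = as x y x \<odot> (as x (y \<odot> x) z \<odot> as y x z)"
    using cocycle[of x y x z] x y z by simp
  have 2: "as (x \<odot> y) x z \<odot> as x y (x \<odot> z) = e" using as_M[of x y z] x y z by simp
  have 3: "as x (y \<odot> x) z = as x y z" using as_sw2[of x y x z] as_A[of x y z] x y z by simp
  have "as x y z \<odot> as y x z = e" using 1 2 3 x y z by simp
  then show ?thesis using zi_eq x y z by (metis as_Zi)
qed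

lemma as_B: assumes x: "x \<in> G" and y: "y \<in> G" and z: "z \<in> G"
  shows "as x (y \<odot> z) z = as x y z"
proof -
  have 1: "as (x \<odot> y) z z \<odot> as x y (z \<odot> z) = as x y z \<odot> (as x (y \<odot> z) z \<odot> as y z z)"
    using cocycle[of x y z z] x y z by simp
  have 2: "as x y (z \<odot> z) = e" using as_z3[of "sq z" x y] x y z by (simp add: sq_eq)
  have "as x y z \<odot> as x (y \<odot> z) z = e" using 1 2 x y z by simp
  then show ?thesis using zi_eq x y z by (metis as_Zi mc)
qed

lemma as_sym23: assumes x: "x \<in> G" and y: "y \<in> G" and z: "z \<in> G"
  shows "as x z y = as x y z"
proof -
  have C2: "as (x \<odot> z) y z \<odot> as x z (y \<odot> z) = as x z y \<odot> (as x (z \<odot> y) z \<odot> as z y z)"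
    using cocycle[of x z y z] x y z by simp
  have b: "as x (z \<odot> y) z = as x y z" using as_sw2[of y z x z] as_B[of x y z] x y z by simp
  have C3: "as (x \<odot> y) (y \<odot> z) (y \<odot> z) \<odot> as x y ((y \<odot> z) \<odot> (y \<odot> z)) =
      as x y (y \<odot> z) \<odot> (as x (y \<odot> (y \<odot> z)) (y \<odot> z) \<odot> as y (y \<odot> z) (y \<odot> z))"
    using cocycle[of x y "y \<odot> z" "y \<odot> z"] x y z by simp
  have c1: "as x y ((y \<odot> z) \<odot> (y \<odot> z)) = e" using as_z3[of "sq (y \<odot> z)" x y] x y z by (simp add: sq_eq)
  have c2: "y \<odot> (y \<odot> z) = z \<odot> sq y" using lalt[of y z] x y z zc_comm[of "sq y" z] by (simp add: sq_eq)
  have c3: "as x (y \<odot> (y \<odot> z)) (y \<odot> z) = as x z (y \<odot> z)" using c2 as_c2[of "sq y" x z "y \<odot> z"] x y z by simp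
  have d: "as x z (y \<odot> z) = as x y (y \<odot> z)" using C3 c1 c3 x y z
    by (simp add: zac) (metis as_Zi mc zi_eq)
  have C4: "as (y \<odot> x) z z \<odot> as y x (z \<odot> z) = as y x z \<odot> (as y (x \<odot> z) z \<odot> as x z z)"
    using cocycle[of y x z z] x y z by simp
  have d4: "as y x (z \<odot> z) = e" using as_z3[of "sq z" y x] x y z by (simp add: sq_eq)
  have f: "as y (x \<odot> z) z = as y x z" using C4 d4 x y z
    by (simp add: zac) (metis as_Zi mc zi_eq)
  have g: "as (x \<odot> z) y z = as x y z" using f as_sym12[of y "x \<odot> z" z] as_sym12[of y x z] x y z by simp
  have C5: "as (y \<odot> x) y z \<odot> as y x (y \<odot> z) = as y x y \<odot> (as y (x \<odot> y) z \<odot> as x y z)"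
    using cocycle[of y x y z] x y z by simp
  have h1: "as (y \<odot> x) y z = as x y z" using as_sym12[of y "y \<odot> x" z] as_A[of y x z] as_sym12[of x y z] x y z by simp
  have h2: "as y (x \<odot> y) z = as x y z" using as_sw2[of x y y z] as_A[of y x z] as_sym12[of x y z] x y z by simp
  have h: "as y x (y \<odot> z) = as x y z" using C5 h1 h2 x y z
    by (simp add: zac) (metis as_Zi mc zi_eq)
  have i: "as x y (y \<odot> z) = as x y z" using h as_sym12[of x y "y \<odot> z"] x y z by simp
  have "as x z y \<odot> as x y z = e" using C2 b d g i x y z by (simp add: zac)
  then show ?thesis using zi_eq x y z by (metis as_Zi)
qed

end

context eloop begin

lemma as_lin1: assumes x: "x \<in> G" and y: "y \<in> G" and z: "z \<in> G" and w: "w \<in> G"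
  shows "as (x \<odot> y) z w = as x z w \<odot> as y z w"
proof -
  have C1: "as (x \<odot> y) z w \<odot> as x y (z \<odot> w) = as x y z \<odot> (as x (y \<odot> z) w \<odot> as y z w)"
    using cocycle[of x y z w] x y z w by simp
  have C2: "as (x \<odot> z) y w \<odot> as x z (y \<odot> w) = as x z y \<odot> (as x (z \<odot> y) w \<odot> as z y w)"
    using cocycle[of x z y w] x y z w by simp
  have C3: "as (x \<odot> z) w y \<odot> as x z (w \<odot> y) = as x z w \<odot> (as x (z \<odot> w) y \<odot> as z w y)"
    using cocycle[of x z w y] x y z w by simp
  have e1: "as (x \<odot> z) w y = as (x \<odot> z) y w" using as_sym23[of "x \<odot> z" y w] x y z w by simp
  have e2: "as x z (w \<odot> y) = as x z (y \<odot> w)" using as_sw3[of y w x z] x y z w by simp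
  have e3: "as x z y = as x y z" using as_sym23[of x y z] x y z by simp
  have e4: "as x (z \<odot> y) w = as x (y \<odot> z) w" using as_sw2[of y z x w] x y z w by simp
  have e5: "as z y w = as y z w" using as_sym12[of y z w] x y z w by simp
  have e6: "as z w y = as y z w" using as_sym23[of z y w] as_sym12[of y z w] x y z w by simp
  have e7: "as x (z \<odot> w) y = as x y (z \<odot> w)" using as_sym23[of x y "z \<odot> w"] x y z w by simp
  have "as (x \<odot> y) z w \<odot> as x y (z \<odot> w) = as x z w \<odot> (as x y (z \<odot> w) \<odot> as y z w)"
    using C1 C2 C3 e1 e2 e3 e4 e5 e6 e7 by simp
  then have "(as (x \<odot> y) z w \<odot> as x y (z \<odot> w)) \<odot> as x y (z \<odot> w) = (as x z w \<odot> (as x y (z \<odot> w) \<odot> as y z w)) \<odot> as x y (z \<odot> w)"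
    by simp
  then show ?thesis using x y z w by (simp add: zac)
qed

lemma as_lin2: assumes x: "x \<in> G" and y: "y \<in> G" and z: "z \<in> G" and w: "w \<in> G"
  shows "as z (x \<odot> y) w = as z x w \<odot> as z y w"
  using as_lin1[of x y z w] as_sym12[of z "x \<odot> y" w] as_sym12[of z x w] as_sym12[of z y w] x y z w by simp

lemma as_lin3: assumes x: "x \<in> G" and y: "y \<in> G" and z: "z \<in> G" and w: "w \<in> G"
  shows "as z w (x \<odot> y) = as z w x \<odot> as z w y"
  using as_lin2[of x y z w] as_sym23[of z w "x \<odot> y"] as_sym23[of z w x] as_sym23[of z w y] x y z w by simp

lemma zi_move: "u = v \<odot> c \<Longrightarrow> c \<in> Zi \<Longrightarrow> v \<in> G \<Longrightarrow> v = u \<odot> c"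
  by (simp add: zc_assoc3)

lemma cm_sym: assumes x: "x \<in> G" and y: "y \<in> G" shows "cm y x = cm x y"
proof -
  have 1: "x \<odot> y = (y \<odot> x) \<odot> cm x y" using cm_eq[of x y] x y by blast
  have 2: "y \<odot> x = (x \<odot> y) \<odot> cm y x" using cm_eq[of y x] x y by blast
  have "x \<odot> y = ((x \<odot> y) \<odot> cm y x) \<odot> cm x y" by (subst 2[symmetric]) (rule 1)
  also have "\<dots> = (x \<odot> y) \<odot> (cm y x \<odot> cm x y)" using zc_assoc3[of "cm y x" "cm x y" "x \<odot> y"] x y by simp
  finally have "(x \<odot> y) \<odot> e = (x \<odot> y) \<odot> (cm y x \<odot> cm x y)" using x y by simp
  then have "e = cm y x \<odot> cm x y" by (rule P_cancel[rotated 3]) (use x y in simp_all)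
  then show ?thesis using zi_eq x y by (metis cm_Zi)
qed

lemma cm_mult1: assumes a: "a \<in> G" and b: "b \<in> G" and c: "c \<in> G"
  shows "cm (a \<odot> b) c = cm a c \<odot> (cm b c \<odot> as a b c)"
proof -
  let ?P = "c \<odot> (a \<odot> b)"
  have s1: "(a \<odot> b) \<odot> c = (a \<odot> (b \<odot> c)) \<odot> as a b c" using as_eq[of a b c] a b c by simp
  have s2: "b \<odot> c = (c \<odot> b) \<odot> cm b c" using cm_eq[of b c] b c by simp
  have s3: "a \<odot> (c \<odot> b) = ((a \<odot> c) \<odot> b) \<odot> as a c b"
    using zi_move[OF as_eq[of a c b]] a b c by simp
  have s4: "a \<odot> c = (c \<odot> a) \<odot> cm a c" using cm_eq[of a c] a c by simp
  have s5: "(c \<odot> a) \<odot> b = ?P \<odot> as c a b" using as_eq[of c a b] a b c by simp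
  have "(a \<odot> b) \<odot> c = ((a \<odot> ((c \<odot> b) \<odot> cm b c)) \<odot> as a b c)" using s1 s2 by simp
  also have "\<dots> = ((a \<odot> (c \<odot> b)) \<odot> cm b c) \<odot> as a b c" using zc_assoc2[of "cm b c" a "c \<odot> b"] a b c by simp
  also have "\<dots> = ((((c \<odot> a) \<odot> cm a c) \<odot> b) \<odot> as a c b \<odot> cm b c) \<odot> as a b c" using s3 s4 by simp
  also have "\<dots> = ((((c \<odot> a) \<odot> b) \<odot> cm a c) \<odot> as a c b \<odot> cm b c) \<odot> as a b c" using zc_assoc[of "cm a c" "c \<odot> a" b] a b c by simp
  also have "\<dots> = (((?P \<odot> as c a b) \<odot> cm a c) \<odot> as a c b \<odot> cm b c) \<odot> as a b c" using s5 by simp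
  also have "\<dots> = ?P \<odot> (as c a b \<odot> (cm a c \<odot> (as a c b \<odot> (cm b c \<odot> as a b c))))"
    using a b c by (simp add: zc_assoc3)
  finally have 1: "(a \<odot> b) \<odot> c = ?P \<odot> (as c a b \<odot> (cm a c \<odot> (as a c b \<odot> (cm b c \<odot> as a b c))))" .
  have 2: "(a \<odot> b) \<odot> c = ?P \<odot> cm (a \<odot> b) c" using cm_eq[of "a \<odot> b" c] a b c by simp
  have "cm (a \<odot> b) c = as c a b \<odot> (cm a c \<odot> (as a c b \<odot> (cm b c \<odot> as a b c)))"
    by (rule P_cancel[of ?P]) (use 1 2 a b c in simp_all)
  also have "\<dots> = cm a c \<odot> (cm b c \<odot> as a b c)"
    using as_sym12[of a c b] as_sym23[of a b c] a b c by (simp add: zac)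
  finally show ?thesis .
qed

lemma cm_mult2: assumes a: "a \<in> G" and b: "b \<in> G" and c: "c \<in> G"
  shows "cm c (a \<odot> b) = cm c a \<odot> (cm c b \<odot> as a b c)"
  using cm_mult1[of a b c] cm_sym[of c "a \<odot> b"] cm_sym[of c a] cm_sym[of c b] a b c by simp

end

primrec zprod :: "'a loop \<Rightarrow> nat \<Rightarrow> (nat \<Rightarrow> 'a) \<Rightarrow> 'a" where
  "zprod L 0 g = lone L"
| "zprod L (Suc m) g = lmult L (g m) (zprod L m g)"

definition pw :: "'a loop \<Rightarrow> bool \<Rightarrow> 'a \<Rightarrow> 'a" where
  "pw L b d = (if b then d else lone L)"

type_synonym coef = "(nat \<Rightarrow> bool) \<times> (nat \<Rightarrow> nat \<Rightarrow> bool) \<times> (nat \<Rightarrow> nat \<Rightarrow> nat \<Rightarrow> bool)"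

definition zv :: "'a loop \<Rightarrow> (nat \<Rightarrow> 'a) \<Rightarrow> nat \<Rightarrow> coef \<Rightarrow> 'a" where
  "zv L x n c = (case c of (P, C, A) \<Rightarrow>
     lmult L (zprod L n (\<lambda>i. pw L (P i) (lsq L (x i))))
      (lmult L (zprod L n (\<lambda>j. zprod L j (\<lambda>i. pw L (C i j) (lcomm L (x i) (x j)))))
        (zprod L n (\<lambda>k. zprod L k (\<lambda>j. zprod L j (\<lambda>i. pw L (A i j k) (lassoc L (x i) (x j) (x k))))))))"

definition cxor :: "coef \<Rightarrow> coef \<Rightarrow> coef" where
  "cxor c d = (case c of (P, C, A) \<Rightarrow> case d of (P', C', A') \<Rightarrow>
     (\<lambda>i. P i \<noteq> P' i, \<lambda>i j. C i j \<noteq> C' i j, \<lambda>i j k. A i j k \<noteq> A' i j k))"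

definition c0 :: coef where "c0 = (\<lambda>i. False, \<lambda>i j. False, \<lambda>i j k. False)"

primrec uw :: "'a loop \<Rightarrow> (nat \<Rightarrow> 'a) \<Rightarrow> nat \<Rightarrow> (nat \<Rightarrow> bool) \<Rightarrow> 'a" where
  "uw L x 0 a = lone L"
| "uw L x (Suc m) a = (if a m then lmult L (x m) (uw L x m a) else uw L x m a)"

context eloop begin

lemma zprod_Zi: "(\<And>i. i < m \<Longrightarrow> g i \<in> Zi) \<Longrightarrow> zprod L m g \<in> Zi"
  by (induction m) auto

lemma zprod_cong: "(\<And>i. i < m \<Longrightarrow> g i = h i) \<Longrightarrow> zprod L m g = zprod L m h"
  by (induction m) auto

lemma zprod_mult: "(\<And>i. i < m \<Longrightarrow> g i \<in> Zi) \<Longrightarrow> (\<And>i. i < m \<Longrightarrow> h i \<in> Zi) \<Longrightarrow>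
   zprod L m g \<odot> zprod L m h = zprod L m (\<lambda>i. g i \<odot> h i)"
proof (induction m)
  case 0 then show ?case by simp
next
  case (Suc m)
  have g: "g m \<in> Zi" "h m \<in> Zi" using Suc.prems by auto
  have z: "zprod L m g \<in> Zi" "zprod L m h \<in> Zi" using Suc.prems by (auto intro: zprod_Zi)
  have ih: "zprod L m g \<odot> zprod L m h = zprod L m (\<lambda>i. g i \<odot> h i)" using Suc by auto
  have "zprod L (Suc m) g \<odot> zprod L (Suc m) h = (g m \<odot> zprod L m g) \<odot> (h m \<odot> zprod L m h)" by simp
  also have "\<dots> = (g m \<odot> h m) \<odot> (zprod L m g \<odot> zprod L m h)" using g z by (simp add: zac)
  finally show ?case using ih by simp
qed

lemma zprod_ones: "(\<And>i. i < m \<Longrightarrow> g i = e) \<Longrightarrow> zprod L m g = e"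
  by (induction m) auto

lemma zprod_single: "i < m \<Longrightarrow> (\<And>j. j < m \<Longrightarrow> j \<noteq> i \<Longrightarrow> g j = e) \<Longrightarrow> g i \<in> G \<Longrightarrow> zprod L m g = g i"
proof (induction m)
  case 0 then show ?case by simp
next
  case (Suc m)
  show ?case
  proof (cases "i = m")
    case True
    then have "zprod L m g = e" using Suc.prems by (intro zprod_ones) auto
    then show ?thesis using True Suc.prems by simp
  next
    case False
    then show ?thesis using Suc by simp
  qed
qed

lemma pw_Zi[simp]: "d \<in> Zi \<Longrightarrow> pw L b d \<in> Zi" unfolding pw_def by simp
lemma pw_mult: "d \<in> Zi \<Longrightarrow> pw L b d \<odot> pw L b' d = pw L (b \<noteq> b') d"
  unfolding pw_def by simp

end

locale egen = eloop +
  fixes n :: nat and x :: "nat \<Rightarrow> 'a"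
  assumes xG: "\<And>i. i < n \<Longrightarrow> x i \<in> G"
begin

abbreviation S where "S \<equiv> lgen L (x ` {..<n})"
abbreviation zz where "zz \<equiv> zv L x n"
definition Z0 :: "'a set" where "Z0 = range zz"

lemma S_G: "w \<in> S \<Longrightarrow> w \<in> G"
  by (induction rule: lgen.induct) auto

lemma x_S: "i < n \<Longrightarrow> x i \<in> S"
  using xG by (intro lgen.gen_base) auto

lemma zz_Zi[simp]: "zz c \<in> Zi"
proof -
  obtain P C A where c: "c = (P, C, A)" by (cases c) auto
  show ?thesis unfolding zv_def c using xG by (auto intro!: Zi_mult zprod_Zi)
qed

lemma Z0_Zi[simp]: "z \<in> Z0 \<Longrightarrow> z \<in> Zi" unfolding Z0_def by auto
lemma Z0_Zc[simp]: "z \<in> Z0 \<Longrightarrow> z \<in> Zc" by simp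
lemma Z0_G[simp]: "z \<in> Z0 \<Longrightarrow> z \<in> G" by simp

lemma zz_mult: "zz c \<odot> zz d = zz (cxor c d)"
proof -
  obtain P C A where c: "c = (P, C, A)" by (cases c) auto
  obtain P' C' A' where d: "d = (P', C', A')" by (cases d) auto
  let ?p = "\<lambda>P. zprod L n (\<lambda>i. pw L (P i) (sq (x i)))"
  let ?c = "\<lambda>C. zprod L n (\<lambda>j. zprod L j (\<lambda>i. pw L (C i j) (cm (x i) (x j))))"
  let ?a = "\<lambda>A. zprod L n (\<lambda>k. zprod L k (\<lambda>j. zprod L j (\<lambda>i. pw L (A i j k) (as (x i) (x j) (x k)))))"
  have pZ: "?p Q \<in> Zi" for Q using xG by (auto intro!: zprod_Zi)
  have cZ: "?c Q \<in> Zi" for Q using xG by (auto intro!: zprod_Zi)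
  have aZ: "?a Q \<in> Zi" for Q using xG by (auto intro!: zprod_Zi)
  have pm: "?p P \<odot> ?p P' = ?p (\<lambda>i. P i \<noteq> P' i)"
    using xG by (subst zprod_mult) (auto simp: pw_mult intro!: zprod_cong)
  have cm': "?c C \<odot> ?c C' = ?c (\<lambda>i j. C i j \<noteq> C' i j)"
    using xG by (subst zprod_mult) (auto simp: pw_mult zprod_mult intro!: zprod_cong zprod_Zi)
  have am2: "zprod L k (\<lambda>j. zprod L j (\<lambda>i. pw L (A i j k) (as (x i) (x j) (x k)))) \<odot>
     zprod L k (\<lambda>j. zprod L j (\<lambda>i. pw L (A' i j k) (as (x i) (x j) (x k)))) =
     zprod L k (\<lambda>j. zprod L j (\<lambda>i. pw L (A i j k \<noteq> A' i j k) (as (x i) (x j) (x k))))" if "k < n" for k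
    using xG that by (subst zprod_mult) (auto simp: pw_mult zprod_mult intro!: zprod_cong zprod_Zi)
  have am: "?a A \<odot> ?a A' = ?a (\<lambda>i j k. A i j k \<noteq> A' i j k)"
    using xG by (subst zprod_mult) (auto simp: am2 intro!: zprod_cong zprod_Zi)
  have "zz c \<odot> zz d = (?p P \<odot> (?c C \<odot> ?a A)) \<odot> (?p P' \<odot> (?c C' \<odot> ?a A'))"
    unfolding zv_def c d by simp
  also have "\<dots> = (?p P \<odot> ?p P') \<odot> ((?c C \<odot> ?c C') \<odot> (?a A \<odot> ?a A'))"
    using pZ cZ aZ by (simp add: zac)
  also have "\<dots> = zz (cxor c d)" unfolding zv_def cxor_def c d pm cm' am by simp
  finally show ?thesis .
qed

lemma Z0_mult[simp]: "a \<in> Z0 \<Longrightarrow> b \<in> Z0 \<Longrightarrow> a \<odot> b \<in> Z0"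
  unfolding Z0_def using zz_mult by auto

lemma zz_c0: "zz c0 = e"
  unfolding zv_def c0_def pw_def by (simp add: zprod_ones)

lemma Z0_e[simp]: "e \<in> Z0" unfolding Z0_def using zz_c0 by (metis rangeI)

lemma Z0_sq: assumes i: "i < n" shows "sq (x i) \<in> Z0"
proof -
  have "zz (\<lambda>j. j = i, \<lambda>a b. False, \<lambda>a b c. False) = sq (x i)"
    unfolding zv_def pw_def using i xG by (simp add: zprod_ones zprod_single[of i n])
  then show ?thesis unfolding Z0_def by (metis rangeI)
qed

lemma Z0_cm_ord: assumes ij: "i < j" "j < n" shows "cm (x i) (x j) \<in> Z0"
proof -
  have inner: "zprod L b (\<lambda>a. pw L (a = i \<and> b = j) (cm (x a) (x b))) = (if b = j then cm (x i) (x j) else e)"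
    if "b < n" for b
  proof (cases "b = j")
    case True
    then show ?thesis using ij xG zprod_single[of i b "\<lambda>a. pw L (a = i \<and> b = j) (cm (x a) (x b))"]
      by (simp add: pw_def)
  next
    case False
    then show ?thesis by (simp add: pw_def zprod_ones)
  qed
  have c: "zprod L n (\<lambda>b. zprod L b (\<lambda>a. pw L (a = i \<and> b = j) (cm (x a) (x b)))) = cm (x i) (x j)"
  proof -
    have "zprod L n (\<lambda>b. zprod L b (\<lambda>a. pw L (a = i \<and> b = j) (cm (x a) (x b)))) =
          zprod L n (\<lambda>b. if b = j then cm (x i) (x j) else e)"
      by (rule zprod_cong) (simp add: inner)
    also have "\<dots> = cm (x i) (x j)" using ij xG by (subst zprod_single[of j n]) auto
    finally show ?thesis .
  qed
  have "zz (\<lambda>j. False, \<lambda>a b. a = i \<and> b = j, \<lambda>a b c. False) = cm (x i) (x j)"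
    unfolding zv_def using ij xG c by (simp add: pw_def zprod_ones)
  then show ?thesis unfolding Z0_def by (metis rangeI)
qed

end

context egen begin

lemma Z0_as_ord: assumes ijk: "i < j" "j < k" "k < n" shows "as (x i) (x j) (x k) \<in> Z0"
proof -
  let ?A = "\<lambda>a b c. a = i \<and> b = j \<and> c = k"
  let ?v = "as (x i) (x j) (x k)"
  have vG: "?v \<in> G" using ijk xG by simp
  have l1: "zprod L b (\<lambda>a. pw L (?A a b c) (as (x a) (x b) (x c))) = (if b = j \<and> c = k then ?v else e)"
    if "b < n" for b c
  proof (cases "b = j \<and> c = k")
    case True
    then show ?thesis using ijk xG zprod_single[of i b "\<lambda>a. pw L (?A a b c) (as (x a) (x b) (x c))"]
      by (simp add: pw_def)
  next
    case False
    then show ?thesis by (auto simp add: pw_def zprod_ones)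
  qed
  have l2: "zprod L c (\<lambda>b. zprod L b (\<lambda>a. pw L (?A a b c) (as (x a) (x b) (x c)))) = (if c = k then ?v else e)"
    if "c < n" for c
  proof -
    have "zprod L c (\<lambda>b. zprod L b (\<lambda>a. pw L (?A a b c) (as (x a) (x b) (x c)))) =
          zprod L c (\<lambda>b. if b = j \<and> c = k then ?v else e)"
      by (rule zprod_cong) (use that in \<open>simp add: l1\<close>)
    also have "\<dots> = (if c = k then ?v else e)"
    proof (cases "c = k")
      case True
      then show ?thesis using ijk vG by (subst zprod_single[of j c]) auto
    next
      case False
      then show ?thesis by (simp add: zprod_ones)
    qed
    finally show ?thesis .
  qed
  have l3: "zprod L n (\<lambda>c. zprod L c (\<lambda>b. zprod L b (\<lambda>a. pw L (?A a b c) (as (x a) (x b) (x c))))) = ?v"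
  proof -
    have "zprod L n (\<lambda>c. zprod L c (\<lambda>b. zprod L b (\<lambda>a. pw L (?A a b c) (as (x a) (x b) (x c))))) =
          zprod L n (\<lambda>c. if c = k then ?v else e)"
      by (rule zprod_cong) (simp add: l2)
    also have "\<dots> = ?v" using ijk vG by (subst zprod_single[of k n]) auto
    finally show ?thesis .
  qed
  have "zz (\<lambda>j. False, \<lambda>a b. False, ?A) = ?v"
    unfolding zv_def using ijk xG l3 by (simp add: pw_def zprod_ones)
  then show ?thesis unfolding Z0_def by (metis rangeI)
qed

lemma Z0_as: assumes "i < n" "j < n" "k < n" shows "as (x i) (x j) (x k) \<in> Z0"
proof -
  have G3: "x i \<in> G" "x j \<in> G" "x k \<in> G" using assms xG by auto
  have p1: "as (x j) (x i) (x k) = as (x i) (x j) (x k)" using as_sym12 G3 by simp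
  have p2: "as (x i) (x k) (x j) = as (x i) (x j) (x k)" using as_sym23 G3 by simp
  have p3: "as (x j) (x k) (x i) = as (x i) (x j) (x k)" using as_sym12 as_sym23 G3 by metis
  have p4: "as (x k) (x i) (x j) = as (x i) (x j) (x k)" using as_sym12 as_sym23 G3 by metis
  have p5: "as (x k) (x j) (x i) = as (x i) (x j) (x k)" using as_sym12 as_sym23 G3 by metis
  consider "i = j" | "j = k" | "i = k" | "i < j \<and> j < k" | "i < k \<and> k < j" | "j < i \<and> i < k"
    | "j < k \<and> k < i" | "k < i \<and> i < j" | "k < j \<and> j < i" by linarith
  then show ?thesis
  proof cases
    case 1 then show ?thesis using G3 by simp
  next
    case 2 then show ?thesis using G3 by simp
  next
    case 3 then show ?thesis using G3 by simp
  next
    case 4 then show ?thesis using Z0_as_ord assms by simp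
  next
    case 5 then show ?thesis using Z0_as_ord[of i k j] assms p2 by simp
  next
    case 6 then show ?thesis using Z0_as_ord[of j i k] assms p1 by simp
  next
    case 7 then show ?thesis using Z0_as_ord[of j k i] assms p3 by simp
  next
    case 8 then show ?thesis using Z0_as_ord[of k i j] assms p4 by simp
  next
    case 9 then show ?thesis using Z0_as_ord[of k j i] assms p5 by simp
  qed
qed

lemma Z0_cm: assumes "i < n" "j < n" shows "cm (x i) (x j) \<in> Z0"
proof -
  consider "i < j" | "i = j" | "j < i" by linarith
  then show ?thesis
  proof cases
    case 1 then show ?thesis using Z0_cm_ord assms by simp
  next
    case 2 then show ?thesis using assms xG by simp
  next
    case 3 then show ?thesis using Z0_cm_ord[of j i] assms xG cm_sym[of "x j" "x i"] by simp
  qed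
qed

lemma S_closed: "a \<in> S \<Longrightarrow> b \<in> S \<Longrightarrow> a \<odot> b \<in> S" by (rule lgen.gen_mult)

lemma lin_S:
  assumes hG: "\<And>w. w \<in> S \<Longrightarrow> h w \<in> G"
    and hgen: "\<And>i. i < n \<Longrightarrow> h (x i) \<in> Z0"
    and he: "h e \<in> Z0"
    and hmul: "\<And>a b. a \<in> S \<Longrightarrow> b \<in> S \<Longrightarrow> \<exists>q\<in>Z0. h (a \<odot> b) = h a \<odot> (h b \<odot> q)"
    and w: "w \<in> S"
  shows "h w \<in> Z0"
  using w
proof (induction rule: lgen.induct)
  case (gen_base y)
  then show ?case using hgen by auto
next
  case gen_one
  then show ?case using he by simp
next
  case (gen_mult a b)
  then obtain q where q: "q \<in> Z0" "h (a \<odot> b) = h a \<odot> (h b \<odot> q)" using hmul by blast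
  then show ?case using gen_mult by simp
next
  case (gen_ldiv a b)
  let ?w = "ld a b"
  have aG: "a \<in> G" "b \<in> G" using gen_ldiv S_G by auto
  have wS: "?w \<in> S" using gen_ldiv by (intro lgen.gen_ldiv)
  have hw: "h ?w \<in> G" using hG wS by simp
  obtain q where q: "q \<in> Z0" "h (a \<odot> ?w) = h a \<odot> (h ?w \<odot> q)" using hmul[OF gen_ldiv(1) wS] by blast
  have "h b = h a \<odot> (h ?w \<odot> q)" using q aG by simp
  also have "\<dots> = (h ?w \<odot> q) \<odot> h a" using zc_comm[of "h a" "h ?w \<odot> q"] gen_ldiv hw q by simp
  also have "\<dots> = h ?w \<odot> (q \<odot> h a)" using zc_assoc3[of q "h a" "h ?w"] gen_ldiv hw q by simp
  finally have "h ?w = h b \<odot> (q \<odot> h a)" using zi_move[of "h b" "h ?w" "q \<odot> h a"] gen_ldiv hw q by simp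
  then show ?case using gen_ldiv q by simp
next
  case (gen_rdiv a b)
  let ?w = "rd a b"
  have aG: "a \<in> G" "b \<in> G" using gen_rdiv S_G by auto
  have wS: "?w \<in> S" using gen_rdiv by (intro lgen.gen_rdiv)
  have hw: "h ?w \<in> G" using hG wS by simp
  obtain q where q: "q \<in> Z0" "h (?w \<odot> b) = h ?w \<odot> (h b \<odot> q)" using hmul[OF wS \<open>b \<in> S\<close>] by blast
  have "h a = h ?w \<odot> (h b \<odot> q)" using q aG by simp
  then have "h ?w = h a \<odot> (h b \<odot> q)" using zi_move[of "h a" "h ?w" "h b \<odot> q"] gen_rdiv hw q by simp
  then show ?case using gen_rdiv q by simp
qed

lemma F1: assumes "i < n" "j < n" "w \<in> S" shows "as (x i) (x j) w \<in> Z0"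
proof (rule lin_S[where h = "as (x i) (x j)"])
  show "\<And>w. w \<in> S \<Longrightarrow> as (x i) (x j) w \<in> G" using assms xG S_G by simp
  show "\<And>k. k < n \<Longrightarrow> as (x i) (x j) (x k) \<in> Z0" using assms Z0_as by simp
  show "as (x i) (x j) e \<in> Z0" using assms xG by simp
  show "\<exists>q\<in>Z0. as (x i) (x j) (a \<odot> b) = as (x i) (x j) a \<odot> (as (x i) (x j) b \<odot> q)" if "a \<in> S" "b \<in> S" for a b
    using that assms xG S_G as_lin3[of a b "x i" "x j"] by (intro bexI[of _ e]) simp_all
qed (rule assms(3))

lemma F2: assumes "i < n" "v \<in> S" "w \<in> S" shows "as (x i) v w \<in> Z0"
proof (rule lin_S[where h = "\<lambda>v. as (x i) v w"])
  show "\<And>v. v \<in> S \<Longrightarrow> as (x i) v w \<in> G" using assms xG S_G by simp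
  show "\<And>k. k < n \<Longrightarrow> as (x i) (x k) w \<in> Z0" using assms F1 by simp
  show "as (x i) e w \<in> Z0" using assms xG S_G by simp
  show "\<exists>q\<in>Z0. as (x i) (a \<odot> b) w = as (x i) a w \<odot> (as (x i) b w \<odot> q)" if "a \<in> S" "b \<in> S" for a b
    using that assms xG S_G as_lin2[of a b "x i" w] by (intro bexI[of _ e]) simp_all
qed (rule assms(2))

lemma F3: assumes "u \<in> S" "v \<in> S" "w \<in> S" shows "as u v w \<in> Z0"
proof (rule lin_S[where h = "\<lambda>u. as u v w"])
  show "\<And>u. u \<in> S \<Longrightarrow> as u v w \<in> G" using assms xG S_G by simp
  show "\<And>k. k < n \<Longrightarrow> as (x k) v w \<in> Z0" using assms F2 by simp
  show "as e v w \<in> Z0" using assms xG S_G by simp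
  show "\<exists>q\<in>Z0. as (a \<odot> b) v w = as a v w \<odot> (as b v w \<odot> q)" if "a \<in> S" "b \<in> S" for a b
    using that assms xG S_G as_lin1[of a b v w] by (intro bexI[of _ e]) simp_all
qed (rule assms(1))

lemma C1: assumes "i < n" "w \<in> S" shows "cm w (x i) \<in> Z0"
proof (rule lin_S[where h = "\<lambda>w. cm w (x i)"])
  show "\<And>w. w \<in> S \<Longrightarrow> cm w (x i) \<in> G" using assms xG S_G by simp
  show "\<And>k. k < n \<Longrightarrow> cm (x k) (x i) \<in> Z0" using assms Z0_cm by simp
  show "cm e (x i) \<in> Z0" using assms xG by simp
  show "\<exists>q\<in>Z0. cm (a \<odot> b) (x i) = cm a (x i) \<odot> (cm b (x i) \<odot> q)" if "a \<in> S" "b \<in> S" for a b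
    using that assms xG S_G cm_mult1[of a b "x i"] F3[of a b "x i"] x_S by blast
qed (rule assms(2))

end

definition xr :: "(nat \<Rightarrow> bool) \<Rightarrow> (nat \<Rightarrow> bool) \<Rightarrow> nat \<Rightarrow> bool" where
  "xr a b = (\<lambda>i. a i \<noteq> b i)"

lemma xr_cancel1: "xr a (xr a b) = b" unfolding xr_def by auto
lemma xr_cancel2: "xr (xr a b) a = b" unfolding xr_def by auto
lemma xr_cancel3: "xr (xr a b) b = a" unfolding xr_def by auto

context egen begin

lemma uw_S: "m \<le> n \<Longrightarrow> uw L x m a \<in> S"
proof (induction m)
  case 0 then show ?case by (simp add: lgen.gen_one)
next
  case (Suc m) then show ?case using x_S by (simp add: lgen.gen_mult)
qed

lemma uw_G: "m \<le> n \<Longrightarrow> uw L x m a \<in> G" using uw_S S_G by blast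

lemma uw_single: "uw L x m (\<lambda>j. j = i) = (if i < m then x i else e)" if "m \<le> n"
  using that
proof (induction m)
  case 0 then show ?case by simp
next
  case (Suc m) then show ?case using xG by auto
qed

lemma uw_zero: "uw L x m (\<lambda>j. False) = e" by (induction m) auto

lemma cc_mult: "z \<in> Zc \<Longrightarrow> z' \<in> Zc \<Longrightarrow> U \<in> G \<Longrightarrow> V \<in> G \<Longrightarrow> (U \<odot> z) \<odot> (V \<odot> z') = (U \<odot> V) \<odot> (z \<odot> z')"
proof -
  assume a: "z \<in> Zc" "z' \<in> Zc" "U \<in> G" "V \<in> G"
  have "(U \<odot> z) \<odot> (V \<odot> z') = (U \<odot> (V \<odot> z')) \<odot> z" using zc_assoc[of z U "V \<odot> z'"] a by simp
  also have "\<dots> = ((U \<odot> V) \<odot> z') \<odot> z" using zc_assoc2[of z' U V] a by simp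
  also have "\<dots> = (U \<odot> V) \<odot> (z' \<odot> z)" using zc_assoc3[of z' z "U \<odot> V"] a by simp
  also have "\<dots> = (U \<odot> V) \<odot> (z \<odot> z')" using zc_AC[of z' z] a by simp
  finally show ?thesis .
qed

lemma prod_nf: "m \<le> n \<Longrightarrow> \<exists>z\<in>Z0. uw L x m a \<odot> uw L x m b = uw L x m (xr a b) \<odot> z"
proof (induction m)
  case 0 then show ?case by (intro bexI[of _ e]) simp_all
next
  case (Suc m)
  let ?x = "x m" and ?U = "uw L x m a" and ?V = "uw L x m b" and ?W = "uw L x m (xr a b)"
  have m: "m < n" "m \<le> n" using Suc.prems by auto
  have xS: "?x \<in> S" and xG': "?x \<in> G" using x_S xG m by auto
  have US: "?U \<in> S" "?V \<in> S" "?W \<in> S" using uw_S m by auto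
  have UG: "?U \<in> G" "?V \<in> G" "?W \<in> G" using uw_G m by auto
  obtain z where z: "z \<in> Z0" "?U \<odot> ?V = ?W \<odot> z" using Suc m by blast
  have TF: "\<exists>z1\<in>Z0. (?x \<odot> ?U) \<odot> ?V = (?x \<odot> ?W) \<odot> z1"
  proof -
    have A: "as ?x ?U ?V \<in> Z0" using F3 xS US by simp
    have "(?x \<odot> ?U) \<odot> ?V = (?x \<odot> (?U \<odot> ?V)) \<odot> as ?x ?U ?V" using as_eq[of ?x ?U ?V] xG' UG by simp
    also have "\<dots> = (?x \<odot> (?W \<odot> z)) \<odot> as ?x ?U ?V" using z by simp
    also have "\<dots> = ((?x \<odot> ?W) \<odot> z) \<odot> as ?x ?U ?V" using zc_assoc2[of z ?x ?W] z xG' UG by simp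
    also have "\<dots> = (?x \<odot> ?W) \<odot> (z \<odot> as ?x ?U ?V)" using zc_assoc3[of z "as ?x ?U ?V" "?x \<odot> ?W"] z xG' UG A by simp
    finally show ?thesis using z A Z0_mult by blast
  qed
  then obtain z1 where z1: "z1 \<in> Z0" "(?x \<odot> ?U) \<odot> ?V = (?x \<odot> ?W) \<odot> z1" by blast
  consider "a m" "\<not> b m" | "\<not> a m" "b m" | "a m" "b m" | "\<not> a m" "\<not> b m" by blast
  then show ?case
  proof cases
    case 1
    then show ?thesis using z1 by (simp add: xr_def) blast
  next
    case 2
    have K: "cm ?U ?x \<in> Z0" using C1 m US by simp
    have A2: "as ?U ?x ?V \<in> Z0" using F3 xS US by simp
    have "?U \<odot> (?x \<odot> ?V) = ((?U \<odot> ?x) \<odot> ?V) \<odot> as ?U ?x ?V"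
      using zi_move[OF as_eq[of ?U ?x ?V]] xG' UG by simp
    also have "\<dots> = (((?x \<odot> ?U) \<odot> cm ?U ?x) \<odot> ?V) \<odot> as ?U ?x ?V" using cm_eq[of ?U ?x] xG' UG by simp
    also have "\<dots> = (((?x \<odot> ?U) \<odot> ?V) \<odot> cm ?U ?x) \<odot> as ?U ?x ?V"
      using zc_assoc[of "cm ?U ?x" "?x \<odot> ?U" ?V] xG' UG by simp
    also have "\<dots> = (((?x \<odot> ?W) \<odot> z1) \<odot> cm ?U ?x) \<odot> as ?U ?x ?V" using z1 by simp
    also have "\<dots> = (?x \<odot> ?W) \<odot> (z1 \<odot> (cm ?U ?x \<odot> as ?U ?x ?V))"
      using z1 K A2 xG' UG by (simp add: zc_assoc3)
    finally have eqF: "?U \<odot> (?x \<odot> ?V) = (?x \<odot> ?W) \<odot> (z1 \<odot> (cm ?U ?x \<odot> as ?U ?x ?V))" .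
    moreover have "z1 \<odot> (cm ?U ?x \<odot> as ?U ?x ?V) \<in> Z0" using z1 K A2 by simp
    ultimately show ?thesis using 2 by (simp add: xr_def) blast
  next
    case 3
    let ?s = "sq ?x" and ?K = "cm ?U ?x" and ?A = "as (?x \<odot> ?U) ?x ?V"
    have K: "?K \<in> Z0" using C1 m US by simp
    have A3: "?A \<in> Z0" using F3 xS US by (simp add: lgen.gen_mult)
    have s: "?s \<in> Z0" using Z0_sq m by simp
    have fl: "(?x \<odot> ?U) \<odot> ?x = ?x \<odot> (?U \<odot> ?x)" using as_flex[of ?x ?U] as_one_iff[of ?x ?U ?x] xG' UG by simp
    have la: "?x \<odot> (?x \<odot> ?U) = ?U \<odot> ?s"
      using lalt[of ?x ?U] zc_comm[of ?s ?U] xG' UG by (simp add: sq_eq)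
    have "(?x \<odot> ?U) \<odot> ?x = ?x \<odot> ((?x \<odot> ?U) \<odot> ?K)" using fl cm_eq[of ?U ?x] xG' UG by simp
    also have "\<dots> = (?x \<odot> (?x \<odot> ?U)) \<odot> ?K" using zc_assoc2[of ?K ?x "?x \<odot> ?U"] xG' UG by simp
    also have "\<dots> = (?U \<odot> ?s) \<odot> ?K" using la by simp
    finally have xux: "(?x \<odot> ?U) \<odot> ?x = (?U \<odot> ?s) \<odot> ?K" .
    have "(?x \<odot> ?U) \<odot> (?x \<odot> ?V) = (((?x \<odot> ?U) \<odot> ?x) \<odot> ?V) \<odot> ?A"
      using zi_move[OF as_eq[of "?x \<odot> ?U" ?x ?V]] xG' UG by simp
    also have "\<dots> = (((?U \<odot> ?s) \<odot> ?K) \<odot> ?V) \<odot> ?A" using xux by simp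
    also have "\<dots> = (((?U \<odot> ?s) \<odot> ?V) \<odot> ?K) \<odot> ?A" using zc_assoc[of ?K "?U \<odot> ?s" ?V] xG' UG by simp
    also have "\<dots> = (((?U \<odot> ?V) \<odot> ?s) \<odot> ?K) \<odot> ?A" using zc_assoc[of ?s ?U ?V] xG' UG by simp
    also have "\<dots> = (((?W \<odot> z) \<odot> ?s) \<odot> ?K) \<odot> ?A" using z by simp
    also have "\<dots> = ?W \<odot> (z \<odot> (?s \<odot> (?K \<odot> ?A)))" using z K A3 s xG' UG by (simp add: zc_assoc3)
    finally have eqF: "(?x \<odot> ?U) \<odot> (?x \<odot> ?V) = ?W \<odot> (z \<odot> (?s \<odot> (?K \<odot> ?A)))" .
    moreover have "z \<odot> (?s \<odot> (?K \<odot> ?A)) \<in> Z0" using z K A3 s by simp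
    ultimately show ?thesis using 3 by (simp add: xr_def) blast
  next
    case 4
    then show ?thesis using z by (simp add: xr_def) blast
  qed
qed

theorem normal_form: "w \<in> S \<Longrightarrow> \<exists>a. \<exists>z\<in>Z0. w = uw L x n a \<odot> z"
proof (induction rule: lgen.induct)
  case (gen_base y)
  then obtain i where i: "i < n" "y = x i" by auto
  then show ?case using uw_single[of n i] xG
    by (intro exI[of _ "\<lambda>j. j = i"] bexI[of _ e]) simp_all
next
  case gen_one
  then show ?case by (intro exI[of _ "\<lambda>j. False"] bexI[of _ e]) (simp_all add: uw_zero)
next
  case (gen_mult w1 w2)
  then obtain a1 z1 a2 z2 where h: "z1 \<in> Z0" "w1 = uw L x n a1 \<odot> z1" "z2 \<in> Z0" "w2 = uw L x n a2 \<odot> z2" by blast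
  obtain z3 where z3: "z3 \<in> Z0" "uw L x n a1 \<odot> uw L x n a2 = uw L x n (xr a1 a2) \<odot> z3" using prod_nf by blast
  have "w1 \<odot> w2 = (uw L x n a1 \<odot> uw L x n a2) \<odot> (z1 \<odot> z2)" using h cc_mult[of z1 z2 "uw L x n a1" "uw L x n a2"] uw_G[of n] by simp
  also have "\<dots> = uw L x n (xr a1 a2) \<odot> (z3 \<odot> (z1 \<odot> z2))" using z3 h uw_G by (simp add: zc_assoc3)
  finally have eqF: "w1 \<odot> w2 = uw L x n (xr a1 a2) \<odot> (z3 \<odot> (z1 \<odot> z2))" .
  moreover have "z3 \<odot> (z1 \<odot> z2) \<in> Z0" using z3 h by simp
  ultimately show ?case by blast
next
  case (gen_ldiv w1 w2)
  then obtain a1 z1 a2 z2 where h: "z1 \<in> Z0" "w1 = uw L x n a1 \<odot> z1" "z2 \<in> Z0" "w2 = uw L x n a2 \<odot> z2" by blast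
  let ?g = "xr a1 a2"
  obtain z3 where z3: "z3 \<in> Z0" "uw L x n a1 \<odot> uw L x n ?g = uw L x n a2 \<odot> z3"
    using prod_nf[of n a1 ?g] xr_cancel1 by auto
  let ?q = "z3 \<odot> (z1 \<odot> z2)"
  have q: "?q \<in> Z0" using h z3 by simp
  have "w1 \<odot> (uw L x n ?g \<odot> ?q) = (uw L x n a1 \<odot> uw L x n ?g) \<odot> (z1 \<odot> ?q)" using h q cc_mult[of z1 ?q "uw L x n a1" "uw L x n ?g"] uw_G[of n] by simp
  also have "\<dots> = (uw L x n a2 \<odot> z3) \<odot> (z1 \<odot> ?q)" using z3 by simp
  also have "\<dots> = uw L x n a2 \<odot> (z3 \<odot> (z1 \<odot> ?q))" using z3 h q uw_G by (simp add: zc_assoc3)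
  also have "\<dots> = w2" using z3 h by (simp add: zac)
  finally have eqF: "w1 \<odot> (uw L x n ?g \<odot> ?q) = w2" .
  have "ld w1 w2 = uw L x n ?g \<odot> ?q" by (rule ld_unique) (use eqF h q uw_G[of n] in simp_all)
  then show ?case using q by blast
next
  case (gen_rdiv w2 w1)
  then obtain a1 z1 a2 z2 where h: "z1 \<in> Z0" "w1 = uw L x n a1 \<odot> z1" "z2 \<in> Z0" "w2 = uw L x n a2 \<odot> z2" by blast
  let ?g = "xr a2 a1"
  obtain z3 where z3: "z3 \<in> Z0" "uw L x n ?g \<odot> uw L x n a1 = uw L x n a2 \<odot> z3"
    using prod_nf[of n ?g a1] xr_cancel3 by auto
  let ?q = "z3 \<odot> (z1 \<odot> z2)"
  have q: "?q \<in> Z0" using h z3 by simp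
  have "(uw L x n ?g \<odot> ?q) \<odot> w1 = (uw L x n ?g \<odot> uw L x n a1) \<odot> (?q \<odot> z1)" using h q cc_mult[of ?q z1 "uw L x n ?g" "uw L x n a1"] uw_G[of n] by simp
  also have "\<dots> = (uw L x n a2 \<odot> z3) \<odot> (?q \<odot> z1)" using z3 by simp
  also have "\<dots> = uw L x n a2 \<odot> (z3 \<odot> (?q \<odot> z1))" using z3 h q uw_G by (simp add: zc_assoc3)
  also have "\<dots> = w2" using z3 h by (simp add: zac)
  finally have eqF: "(uw L x n ?g \<odot> ?q) \<odot> w1 = w2" .
  have "rd w2 w1 = uw L x n ?g \<odot> ?q" by (rule rd_unique) (use eqF h q uw_G[of n] in simp_all)
  then show ?case using q by blast
qed

end

lemma zprod_cong': "(\<And>i. i < m \<Longrightarrow> g i = h i) \<Longrightarrow> zprod L m g = zprod L m h"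
  by (induction m) auto

lemma hom_in: "loop_hom L K h \<Longrightarrow> a \<in> lcarrier L \<Longrightarrow> h a \<in> lcarrier K"
  unfolding loop_hom_def by blast
lemma hom_mult: "loop_hom L K h \<Longrightarrow> a \<in> lcarrier L \<Longrightarrow> b \<in> lcarrier L \<Longrightarrow> h (lmult L a b) = lmult K (h a) (h b)"
  unfolding loop_hom_def by blast
lemma hom_one: "loop_hom L K h \<Longrightarrow> h (lone L) = lone K"
  unfolding loop_hom_def by blast

lemma hom_ld:
  assumes L: "is_loop L" and K: "is_loop K" and h: "loop_hom L K h"
    and a: "a \<in> lcarrier L" and b: "b \<in> lcarrier L"
  shows "h (lldiv L a b) = lldiv K (h a) (h b)"
proof -
  have d: "lldiv L a b \<in> lcarrier L" "lmult L a (lldiv L a b) = b" using lp.ld[OF _ a b] L unfolding lp_def by auto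
  have "lmult K (h a) (h (lldiv L a b)) = h b" using hom_mult[OF h a d(1)] d by simp
  then show ?thesis using lp.ld_unique[of K "h a" "h (lldiv L a b)" "h b"] K hom_in[OF h] a d unfolding lp_def by simp
qed

lemma hom_rd:
  assumes L: "is_loop L" and K: "is_loop K" and h: "loop_hom L K h"
    and a: "a \<in> lcarrier L" and b: "b \<in> lcarrier L"
  shows "h (lrdiv L b a) = lrdiv K (h b) (h a)"
proof -
  have d: "lrdiv L b a \<in> lcarrier L" "lmult L (lrdiv L b a) a = b" using lp.rd[OF _ a b] L unfolding lp_def by auto
  have "lmult K (h (lrdiv L b a)) (h a) = h b" using hom_mult[OF h d(1) a] d by simp
  then show ?thesis using lp.rd_unique[of K "h a" "h (lrdiv L b a)" "h b"] K hom_in[OF h] a d unfolding lp_def by simp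
qed

lemma hom_cm:
  assumes L: "is_loop L" and K: "is_loop K" and h: "loop_hom L K h"
    and a: "a \<in> lcarrier L" and b: "b \<in> lcarrier L"
  shows "h (lcomm L a b) = lcomm K (h a) (h b)"
proof -
  have d: "lcomm L a b \<in> lcarrier L" "lmult L a b = lmult L (lmult L b a) (lcomm L a b)"
    using lp.cm[OF _ a b] L unfolding lp_def by auto
  have ba: "lmult L b a \<in> lcarrier L" using lp.mc[of L b a] L a b unfolding lp_def by simp
  have "lmult K (h a) (h b) = lmult K (lmult K (h b) (h a)) (h (lcomm L a b))"
    using hom_mult[OF h a b] hom_mult[OF h ba d(1)] hom_mult[OF h b a] d by simp
  then show ?thesis using lp.cm_unique[of K "h a" "h b" "h (lcomm L a b)"] K hom_in[OF h] a b d unfolding lp_def by simp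
qed

lemma hom_as:
  assumes L: "is_loop L" and K: "is_loop K" and h: "loop_hom L K h"
    and a: "a \<in> lcarrier L" and b: "b \<in> lcarrier L" and c: "c \<in> lcarrier L"
  shows "h (lassoc L a b c) = lassoc K (h a) (h b) (h c)"
proof -
  have d: "lassoc L a b c \<in> lcarrier L" "lmult L (lmult L a b) c = lmult L (lmult L a (lmult L b c)) (lassoc L a b c)"
    using lp.as[OF _ a b c] L unfolding lp_def by auto
  have m: "lmult L a b \<in> lcarrier L" "lmult L b c \<in> lcarrier L" "lmult L a (lmult L b c) \<in> lcarrier L"
    using lp.mc[of L] L a b c unfolding lp_def by auto
  have "lmult K (lmult K (h a) (h b)) (h c) = lmult K (lmult K (h a) (lmult K (h b) (h c))) (h (lassoc L a b c))"
    using hom_mult[OF h a b] hom_mult[OF h m(1) c] hom_mult[OF h m(3) d(1)] hom_mult[OF h a m(2)] hom_mult[OF h b c] d by simp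
  then show ?thesis using lp.as_unique[of K "h a" "h b" "h c" "h (lassoc L a b c)"] K hom_in[OF h] a b c d unfolding lp_def by simp
qed

lemma hom_sq:
  assumes h: "loop_hom L K h" and a: "a \<in> lcarrier L"
  shows "h (lsq L a) = lsq K (h a)"
  unfolding lsq_def using hom_mult[OF h a a] .

lemma hom_zprod:
  assumes L: "is_loop L" and h: "loop_hom L K h" and g: "\<And>i. i < m \<Longrightarrow> g i \<in> lcarrier L"
  shows "h (zprod L m g) = zprod K m (\<lambda>i. h (g i))"
  using g
proof (induction m)
  case 0 then show ?case using hom_one[OF h] by simp
next
  case (Suc m)
  have z: "zprod L m g \<in> lcarrier L"
  proof -
    interpret lp L using L by (simp add: lp_def)
    show ?thesis using Suc.prems by (induction m) auto
  qed
  show ?case using Suc hom_mult[OF h _ z, of "g m"] by simp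
qed

lemma hom_pw: "loop_hom L K h \<Longrightarrow> h (pw L b d) = pw K b (h d)"
  unfolding pw_def using hom_one by auto

lemma hom_uw:
  assumes L: "is_loop L" and h: "loop_hom L K h" and x: "\<And>i. i < m \<Longrightarrow> x i \<in> lcarrier L"
  shows "h (uw L x m a) = uw K (\<lambda>i. h (x i)) m a"
  using x
proof (induction m)
  case 0 then show ?case using hom_one[OF h] by simp
next
  case (Suc m)
  have z: "uw L x m a \<in> lcarrier L"
  proof -
    interpret lp L using L by (simp add: lp_def)
    show ?thesis using Suc.prems by (induction m) auto
  qed
  show ?case using Suc hom_mult[OF h _ z, of "x m"] by simp
qed

lemma hom_zv:
  assumes L: "is_loop L" and K: "is_loop K" and h: "loop_hom L K h" and x: "\<And>i. i < n \<Longrightarrow> x i \<in> lcarrier L"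
  shows "h (zv L x n c) = zv K (\<lambda>i. h (x i)) n c"
proof -
  interpret lp L using L by (simp add: lp_def)
  obtain P C A where c: "c = (P, C, A)" by (cases c) auto
  have pwG: "d \<in> G \<Longrightarrow> pw L b d \<in> G" for b d by (simp add: pw_def)
  have zG: "(\<And>i. i < m \<Longrightarrow> g i \<in> G) \<Longrightarrow> zprod L m g \<in> G" for m g by (induction m) auto
  have p: "h (zprod L n (\<lambda>i. pw L (P i) (lsq L (x i)))) = zprod K n (\<lambda>i. pw K (P i) (lsq K (h (x i))))"
    using x by (subst hom_zprod[OF L h]) (auto simp: pwG hom_pw[OF h] hom_sq[OF h] intro!: zprod_cong')
  have cc: "h (zprod L n (\<lambda>j. zprod L j (\<lambda>i. pw L (C i j) (lcomm L (x i) (x j))))) =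
        zprod K n (\<lambda>j. zprod K j (\<lambda>i. pw K (C i j) (lcomm K (h (x i)) (h (x j)))))"
    using x by (subst hom_zprod[OF L h]) (auto simp: pwG hom_pw[OF h] hom_cm[OF L K h] hom_zprod[OF L h] intro!: zprod_cong' zG)
  have a2: "h (zprod L k (\<lambda>j. zprod L j (\<lambda>i. pw L (A i j k) (lassoc L (x i) (x j) (x k))))) =
        zprod K k (\<lambda>j. zprod K j (\<lambda>i. pw K (A i j k) (lassoc K (h (x i)) (h (x j)) (h (x k)))))" if "k < n" for k
    using x that by (subst hom_zprod[OF L h]) (auto simp: pwG hom_pw[OF h] hom_as[OF L K h] hom_zprod[OF L h] intro!: zprod_cong' zG)
  have aa: "h (zprod L n (\<lambda>k. zprod L k (\<lambda>j. zprod L j (\<lambda>i. pw L (A i j k) (lassoc L (x i) (x j) (x k)))))) =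
        zprod K n (\<lambda>k. zprod K k (\<lambda>j. zprod K j (\<lambda>i. pw K (A i j k) (lassoc K (h (x i)) (h (x j)) (h (x k))))))"
    using x by (subst hom_zprod[OF L h]) (auto simp: a2 intro!: zprod_cong' zG simp: pwG)
  have pG: "zprod L n (\<lambda>i. pw L (P i) (lsq L (x i))) \<in> G" using x by (intro zG) (simp add: pwG)
  have cG: "zprod L n (\<lambda>j. zprod L j (\<lambda>i. pw L (C i j) (lcomm L (x i) (x j)))) \<in> G"
    using x by (auto intro!: zG simp: pwG)
  have aG: "zprod L n (\<lambda>k. zprod L k (\<lambda>j. zprod L j (\<lambda>i. pw L (A i j k) (lassoc L (x i) (x j) (x k))))) \<in> G"
    using x by (auto intro!: zG simp: pwG)
  show ?thesis unfolding zv_def c using hom_mult[OF h] pG cG aG p cc aa by simp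
qed

definition s1 :: "'a loop \<Rightarrow> nat \<Rightarrow> 'a \<Rightarrow> nat \<Rightarrow> 'a" where
  "s1 K i0 q = (\<lambda>i. if i = i0 then q else lone K)"
definition s2 :: "'a loop \<Rightarrow> nat \<Rightarrow> nat \<Rightarrow> 'a \<Rightarrow> 'a \<Rightarrow> nat \<Rightarrow> 'a" where
  "s2 K i0 j0 q r = (\<lambda>i. if i = i0 then q else if i = j0 then r else lone K)"
definition s3 :: "'a loop \<Rightarrow> nat \<Rightarrow> nat \<Rightarrow> nat \<Rightarrow> 'a \<Rightarrow> 'a \<Rightarrow> 'a \<Rightarrow> nat \<Rightarrow> 'a" where
  "s3 K i0 j0 k0 q r t = (\<lambda>i. if i = i0 then q else if i = j0 then r else if i = k0 then t else lone K)"

lemma uw_cong: "(\<And>i. i < m \<Longrightarrow> x i = y i) \<Longrightarrow> uw L x m a = uw L y m a"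
  by (induction m) auto

lemma zv_cong: "(\<And>i. i < n \<Longrightarrow> x i = y i) \<Longrightarrow> zv L x n c = zv L y n c"
proof -
  assume h: "\<And>i. i < n \<Longrightarrow> x i = y i"
  obtain P C A where c: "c = (P, C, A)" by (cases c) auto
  have 1: "zprod L n (\<lambda>i. pw L (P i) (lsq L (x i))) = zprod L n (\<lambda>i. pw L (P i) (lsq L (y i)))"
    using h by (intro zprod_cong') simp
  have 2: "zprod L n (\<lambda>j. zprod L j (\<lambda>i. pw L (C i j) (lcomm L (x i) (x j)))) = zprod L n (\<lambda>j. zprod L j (\<lambda>i. pw L (C i j) (lcomm L (y i) (y j))))"
    using h by (intro zprod_cong') (simp cong: zprod_cong')
  have 3: "zprod L n (\<lambda>k. zprod L k (\<lambda>j. zprod L j (\<lambda>i. pw L (A i j k) (lassoc L (x i) (x j) (x k))))) =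
           zprod L n (\<lambda>k. zprod L k (\<lambda>j. zprod L j (\<lambda>i. pw L (A i j k) (lassoc L (y i) (y j) (y k)))))"
    using h by (intro zprod_cong') (simp cong: zprod_cong')
  show ?thesis unfolding zv_def c using 1 2 3 by simp
qed

context eloop begin

lemma pw_e[simp]: "pw L b e = e" unfolding pw_def by simp
lemma pw_F[simp]: "pw L False d = e" unfolding pw_def by simp

lemma zprod2_ones: "(\<And>i j. i < j \<Longrightarrow> j < n \<Longrightarrow> g i j = e) \<Longrightarrow> zprod L n (\<lambda>j. zprod L j (\<lambda>i. g i j)) = e"
  by (rule zprod_ones) (rule zprod_ones, simp)

lemma zprod3_ones: "(\<And>i j k. i < j \<Longrightarrow> j < k \<Longrightarrow> k < n \<Longrightarrow> g i j k = e) \<Longrightarrow>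
    zprod L n (\<lambda>k. zprod L k (\<lambda>j. zprod L j (\<lambda>i. g i j k))) = e"
  by (rule zprod_ones) (rule zprod_ones, rule zprod_ones, simp)

lemma zprod2_single:
  assumes ij: "i0 < j0" "j0 < n" and g: "\<And>i j. i < j \<Longrightarrow> j < n \<Longrightarrow> (i, j) \<noteq> (i0, j0) \<Longrightarrow> g i j = e"
    and gG: "g i0 j0 \<in> G"
  shows "zprod L n (\<lambda>j. zprod L j (\<lambda>i. g i j)) = g i0 j0"
proof -
  have inner: "zprod L j (\<lambda>i. g i j) = (if j = j0 then g i0 j0 else e)" if "j < n" for j
  proof (cases "j = j0")
    case True
    then show ?thesis using ij gG g that by (subst zprod_single[of i0]) auto
  next
    case False
    then show ?thesis using g that by (auto intro!: zprod_ones)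
  qed
  have "zprod L n (\<lambda>j. zprod L j (\<lambda>i. g i j)) = zprod L n (\<lambda>j. if j = j0 then g i0 j0 else e)"
    by (rule zprod_cong) (simp add: inner)
  also have "\<dots> = g i0 j0" using ij gG by (subst zprod_single[of j0]) auto
  finally show ?thesis .
qed

lemma zprod3_single:
  assumes ijk: "i0 < j0" "j0 < k0" "k0 < n"
    and g: "\<And>i j k. i < j \<Longrightarrow> j < k \<Longrightarrow> k < n \<Longrightarrow> (i, j, k) \<noteq> (i0, j0, k0) \<Longrightarrow> g i j k = e"
    and gG: "g i0 j0 k0 \<in> G"
  shows "zprod L n (\<lambda>k. zprod L k (\<lambda>j. zprod L j (\<lambda>i. g i j k))) = g i0 j0 k0"
proof -
  have inner: "zprod L k (\<lambda>j. zprod L j (\<lambda>i. g i j k)) = (if k = k0 then g i0 j0 k0 else e)" if "k < n" for k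
  proof (cases "k = k0")
    case True
    then show ?thesis using ijk gG g that by (subst zprod2_single[of i0 j0]) auto
  next
    case False
    then show ?thesis using g that by (auto intro!: zprod2_ones)
  qed
  have "zprod L n (\<lambda>k. zprod L k (\<lambda>j. zprod L j (\<lambda>i. g i j k))) = zprod L n (\<lambda>k. if k = k0 then g i0 j0 k0 else e)"
    by (rule zprod_cong) (simp add: inner)
  also have "\<dots> = g i0 j0 k0" using ijk gG by (subst zprod_single[of k0]) auto
  finally show ?thesis .
qed

lemma uw_s1: "uw L (s1 L i0 q) m a = (if a i0 \<and> i0 < m then q else e)" if "q \<in> G"
  using that by (induction m) (auto simp: s1_def)

lemma zv_s1: assumes i0: "i0 < n" and q: "q \<in> G"
  shows "zv L (s1 L i0 q) n (P, C, A) = pw L (P i0) (sq q)"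
proof -
  let ?s = "s1 L i0 q"
  have sG: "?s i \<in> G" for i using q by (simp add: s1_def)
  have p: "zprod L n (\<lambda>i. pw L (P i) (sq (?s i))) = pw L (P i0) (sq q)"
    using i0 q by (subst zprod_single[of i0]) (auto simp: s1_def pw_def)
  have c: "zprod L n (\<lambda>j. zprod L j (\<lambda>i. pw L (C i j) (cm (?s i) (?s j)))) = e"
    using q by (intro zprod2_ones) (auto simp: s1_def)
  have a: "zprod L n (\<lambda>k. zprod L k (\<lambda>j. zprod L j (\<lambda>i. pw L (A i j k) (as (?s i) (?s j) (?s k))))) = e"
    using q sG by (intro zprod3_ones) (auto simp: s1_def)
  show ?thesis unfolding zv_def using p c a q by (simp add: pw_def)
qed

lemma zv_s2: assumes ij: "i0 < j0" "j0 < n" and q: "q \<in> G" "r \<in> G" and P: "\<And>i. i < n \<Longrightarrow> \<not> P i"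
  shows "zv L (s2 L i0 j0 q r) n (P, C, A) = pw L (C i0 j0) (cm q r)"
proof -
  let ?s = "s2 L i0 j0 q r"
  have sG: "?s i \<in> G" for i using q by (simp add: s2_def)
  have p: "zprod L n (\<lambda>i. pw L (P i) (sq (?s i))) = e"
    using P by (intro zprod_ones) simp
  have c: "zprod L n (\<lambda>j. zprod L j (\<lambda>i. pw L (C i j) (cm (?s i) (?s j)))) = pw L (C i0 j0) (cm q r)"
    using ij q by (subst zprod2_single[of i0 j0]) (auto simp: s2_def pw_def)
  have a: "zprod L n (\<lambda>k. zprod L k (\<lambda>j. zprod L j (\<lambda>i. pw L (A i j k) (as (?s i) (?s j) (?s k))))) = e"
    using q sG by (intro zprod3_ones) (auto simp: s2_def)
  show ?thesis unfolding zv_def using p c a q by (simp add: pw_def)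
qed

lemma zv_s3: assumes ijk: "i0 < j0" "j0 < k0" "k0 < n" and q: "q \<in> G" "r \<in> G" "t \<in> G"
    and P: "\<And>i. i < n \<Longrightarrow> \<not> P i" and C: "\<And>i j. i < j \<Longrightarrow> j < n \<Longrightarrow> \<not> C i j"
  shows "zv L (s3 L i0 j0 k0 q r t) n (P, C, A) = pw L (A i0 j0 k0) (as q r t)"
proof -
  let ?s = "s3 L i0 j0 k0 q r t"
  have sG: "?s i \<in> G" for i using q by (simp add: s3_def)
  have p: "zprod L n (\<lambda>i. pw L (P i) (sq (?s i))) = e"
    using P by (intro zprod_ones) simp
  have c: "zprod L n (\<lambda>j. zprod L j (\<lambda>i. pw L (C i j) (cm (?s i) (?s j)))) = e"
    using C by (intro zprod2_ones) simp
  have a: "zprod L n (\<lambda>k. zprod L k (\<lambda>j. zprod L j (\<lambda>i. pw L (A i j k) (as (?s i) (?s j) (?s k))))) = pw L (A i0 j0 k0) (as q r t)"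
    using ijk q by (subst zprod3_single[of i0 j0 k0]) (auto simp: s3_def pw_def)
  show ?thesis unfolding zv_def using p c a q by (simp add: pw_def)
qed

end

lemma uw_allF: "(\<And>i. i < m \<Longrightarrow> \<not> a i) \<Longrightarrow> uw L x m a = lone L"
  by (induction m) auto

lemma eloop_loop: "eloop K \<Longrightarrow> is_loop K"
  using eloop.axioms(1) lp.isl by blast

context egen begin

lemma zz_eq_e: assumes P: "\<And>i. i < n \<Longrightarrow> \<not> P i" and C: "\<And>i j. i < j \<Longrightarrow> j < n \<Longrightarrow> \<not> C i j"
   and A: "\<And>i j k. i < j \<Longrightarrow> j < k \<Longrightarrow> k < n \<Longrightarrow> \<not> A i j k"
 shows "zz (P, C, A) = e"
proof -
  have p: "zprod L n (\<lambda>i. pw L (P i) (sq (x i))) = e" using P by (intro zprod_ones) simp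
  have c: "zprod L n (\<lambda>j. zprod L j (\<lambda>i. pw L (C i j) (cm (x i) (x j)))) = e" using C by (intro zprod2_ones) simp
  have a: "zprod L n (\<lambda>k. zprod L k (\<lambda>j. zprod L j (\<lambda>i. pw L (A i j k) (as (x i) (x j) (x k))))) = e"
    using A by (intro zprod3_ones) simp
  show ?thesis unfolding zv_def using p c a by simp
qed

theorem separation:
  assumes K: "eloop K"
    and q: "q1 \<in> lcarrier K" "q2 \<in> lcarrier K" "q3 \<in> lcarrier K"
    and d1: "q1 \<noteq> lone K" and d2: "lmult K q1 (lsq K q1) \<noteq> lone K" and d3: "lsq K q1 \<noteq> lone K"
    and d4: "lcomm K q1 q2 \<noteq> lone K" and d5: "lassoc K q1 q2 q3 \<noteq> lone K"
    and w: "w \<in> S"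
    and H: "\<And>\<sigma>. (\<And>i. \<sigma> i \<in> {lone K, q1, q2, q3}) \<Longrightarrow> \<exists>\<tau>. loop_hom L K \<tau> \<and> (\<forall>i<n. \<tau> (x i) = \<sigma> i) \<and> \<tau> w = lone K"
  shows "w = e"
proof -
  have Kl: "is_loop K" using K by (rule eloop_loop)
  have Klp: "lp K" using K eloop.axioms(1) by blast
  obtain a z where az: "z \<in> Z0" "w = uw L x n a \<odot> z" using normal_form[OF w] by blast
  obtain c where c: "z = zz c" using az unfolding Z0_def by auto
  obtain P C A where cc: "c = (P, C, A)" by (cases c) auto
  have uG: "uw L x n a \<in> G" using uw_G by simp
  have zG: "zz c \<in> G" by simp
  have eval: "\<tau> w = lmult K (uw K \<sigma> n a) (zv K \<sigma> n (P, C, A))"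
    if t: "loop_hom L K \<tau>" "\<forall>i<n. \<tau> (x i) = \<sigma> i" for \<tau> \<sigma>
  proof -
    have "\<tau> w = lmult K (\<tau> (uw L x n a)) (\<tau> (zz c))" using az c hom_mult[OF t(1) uG zG] by simp
    also have "\<tau> (uw L x n a) = uw K \<sigma> n a"
      using hom_uw[OF isl t(1), of n x a] xG t(2) uw_cong[of n "\<lambda>i. \<tau> (x i)" \<sigma>] by simp
    also have "\<tau> (zz c) = zv K \<sigma> n (P, C, A)"
      using hom_zv[OF isl Kl t(1), of n x c] xG t(2) zv_cong[of n "\<lambda>i. \<tau> (x i)" \<sigma>] cc by simp
    finally show ?thesis .
  qed
  have s1r: "s1 K i q1 j \<in> {lone K, q1, q2, q3}" for i j by (simp add: s1_def)
  have s2r: "s2 K i i' q1 q2 j \<in> {lone K, q1, q2, q3}" for i i' j by (simp add: s2_def)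
  have s3r: "s3 K i i' i'' q1 q2 q3 j \<in> {lone K, q1, q2, q3}" for i i' i'' j by (simp add: s3_def)
  have Ka: "\<not> a i" if i: "i < n" for i
  proof
    assume ai: "a i"
    obtain \<tau> where t: "loop_hom L K \<tau>" "\<forall>i'<n. \<tau> (x i') = s1 K i q1 i'" "\<tau> w = lone K"
      using H[of "s1 K i q1"] s1r by blast
    have "\<tau> w = lmult K q1 (pw K (P i) (lsq K q1))"
      using eval[OF t(1) t(2)] eloop.uw_s1[OF K q(1)] eloop.zv_s1[OF K i q(1)] ai i by simp
    then show False using t(3) d1 d2 lp.rone[OF Klp q(1)] by (cases "P i") (simp_all add: pw_def)
  qed
  have ue: "uw K \<sigma> n a = lone K" for \<sigma> using Ka uw_allF[of n a K \<sigma>] by blast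
  have KP: "\<not> P i" if i: "i < n" for i
  proof
    assume pi: "P i"
    obtain \<tau> where t: "loop_hom L K \<tau>" "\<forall>i'<n. \<tau> (x i') = s1 K i q1 i'" "\<tau> w = lone K"
      using H[of "s1 K i q1"] s1r by blast
    have "\<tau> w = lsq K q1"
      using eval[OF t(1) t(2)] ue eloop.zv_s1[OF K i q(1)] pi i lp.lone[OF Klp] lp.sq_in[OF Klp q(1)]
      by (simp add: pw_def)
    then show False using t(3) d3 by simp
  qed
  have KC: "\<not> C i j" if ij: "i < j" "j < n" for i j
  proof
    assume cij: "C i j"
    obtain \<tau> where t: "loop_hom L K \<tau>" "\<forall>i'<n. \<tau> (x i') = s2 K i j q1 q2 i'" "\<tau> w = lone K"
      using H[of "s2 K i j q1 q2"] s2r by blast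
    have "\<tau> w = lcomm K q1 q2"
      using eval[OF t(1) t(2)] ue eloop.zv_s2[OF K ij q(1) q(2), of P C A] KP cij lp.lone[OF Klp] lp.cm_in[OF Klp q(1) q(2)]
      by (simp add: pw_def)
    then show False using t(3) d4 by simp
  qed
  have KA: "\<not> A i j k" if ijk: "i < j" "j < k" "k < n" for i j k
  proof
    assume aijk: "A i j k"
    obtain \<tau> where t: "loop_hom L K \<tau>" "\<forall>i'<n. \<tau> (x i') = s3 K i j k q1 q2 q3 i'" "\<tau> w = lone K"
      using H[of "s3 K i j k q1 q2 q3"] s3r by blast
    have "\<tau> w = lassoc K q1 q2 q3"
      using eval[OF t(1) t(2)] ue eloop.zv_s3[OF K ijk q(1) q(2) q(3), of P C A] KP KC aijk lp.lone[OF Klp] lp.as_in[OF Klp q(1) q(2) q(3)]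
      by (simp add: pw_def)
    then show False using t(3) d5 by simp
  qed
  have "uw L x n a = e" using Ka uw_allF by blast
  moreover have "z = e" using c cc zz_eq_e KP KC KA by simp
  ultimately show ?thesis using az by simp
qed

end

type_synonym ob = "bool \<times> bool \<times> bool \<times> bool"

definition th :: "bool \<Rightarrow> bool \<Rightarrow> bool \<Rightarrow> bool \<Rightarrow> bool \<Rightarrow> bool \<Rightarrow> bool" where
  "th a0 a1 a2 b0 b1 b2 = (((((((((a0 \<and> b0) \<noteq> (a1 \<and> b1)) \<noteq> (a2 \<and> b2)) \<noteq> (a0 \<and> b1)) \<noteq> (a0 \<and> b2)) \<noteq> (a1 \<and> b2)) \<noteq> (a0 \<and> a1 \<and> b2)) \<noteq> (a0 \<and> a2 \<and> b1)) \<noteq> (a1 \<and> a2 \<and> b0))"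

fun omul :: "ob \<Rightarrow> ob \<Rightarrow> ob" where
  "omul (a0, a1, a2, s) (b0, b1, b2, t) = (a0 \<noteq> b0, a1 \<noteq> b1, a2 \<noteq> b2, (s \<noteq> t) \<noteq> th a0 a1 a2 b0 b1 b2)"

definition OL :: "ob loop" where
  "OL = \<lparr> lcarrier = UNIV, lmult = omul, lone = (False, False, False, False) \<rparr>"

lemma th_0l[simp]: "th False False False b0 b1 b2 = False" by (simp add: th_def)
lemma th_0r[simp]: "th a0 a1 a2 False False False = False" by (simp add: th_def)

lemma OL_loop: "is_loop OL"
proof -
  have l: "\<exists>!x. omul a x = b" for a b
  proof -
    obtain a0 a1 a2 s where a: "a = (a0, a1, a2, s)" by (cases a) auto
    obtain b0 b1 b2 t where b: "b = (b0, b1, b2, t)" by (cases b) auto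
    show ?thesis
    proof
      show "omul a (a0 \<noteq> b0, a1 \<noteq> b1, a2 \<noteq> b2, (s \<noteq> t) \<noteq> th a0 a1 a2 (a0 \<noteq> b0) (a1 \<noteq> b1) (a2 \<noteq> b2)) = b"
        unfolding a b by auto
      fix y assume "omul a y = b"
      then show "y = (a0 \<noteq> b0, a1 \<noteq> b1, a2 \<noteq> b2, (s \<noteq> t) \<noteq> th a0 a1 a2 (a0 \<noteq> b0) (a1 \<noteq> b1) (a2 \<noteq> b2))"
        unfolding a b by (cases y) auto
    qed
  qed
  have r: "\<exists>!y. omul y a = b" for a b
  proof -
    obtain a0 a1 a2 s where a: "a = (a0, a1, a2, s)" by (cases a) auto
    obtain b0 b1 b2 t where b: "b = (b0, b1, b2, t)" by (cases b) auto
    show ?thesis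
    proof
      show "omul (a0 \<noteq> b0, a1 \<noteq> b1, a2 \<noteq> b2, (s \<noteq> t) \<noteq> th (a0 \<noteq> b0) (a1 \<noteq> b1) (a2 \<noteq> b2) a0 a1 a2) a = b"
        unfolding a b by auto
      fix y assume "omul y a = b"
      then show "y = (a0 \<noteq> b0, a1 \<noteq> b1, a2 \<noteq> b2, (s \<noteq> t) \<noteq> th (a0 \<noteq> b0) (a1 \<noteq> b1) (a2 \<noteq> b2) a0 a1 a2)"
        unfolding a b by (cases y) auto
    qed
  qed
  have one: "omul (False, False, False, False) x = x \<and> omul x (False, False, False, False) = x" for x
    by (cases x) auto
  show ?thesis unfolding is_loop_def OL_def using l r one by simp
qed

lemma th_key: "((th a0 a1 a2 b0 b1 b2 \<noteq> th (a0 \<noteq> b0) (a1 \<noteq> b1) (a2 \<noteq> b2) a0 a1 a2) \<noteq> th ((a0 \<noteq> b0) \<noteq> a0) ((a1 \<noteq> b1) \<noteq> a1) ((a2 \<noteq> b2) \<noteq> a2) z0 z1 z2)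
  = ((th a0 a1 a2 z0 z1 z2 \<noteq> th b0 b1 b2 (a0 \<noteq> z0) (a1 \<noteq> z1) (a2 \<noteq> z2)) \<noteq> th a0 a1 a2 (b0 \<noteq> (a0 \<noteq> z0)) (b1 \<noteq> (a1 \<noteq> z1)) (b2 \<noteq> (a2 \<noteq> z2)))"
  by (cases a0; cases a1; cases a2; cases b0; cases b1; cases b2; cases z0; cases z1; cases z2) (simp_all add: th_def)

lemma OL_moufang_raw: "omul (omul (omul x y) x) z = omul x (omul y (omul x z))"
proof -
  obtain a0 a1 a2 s where a: "x = (a0, a1, a2, s)" by (cases x) auto
  obtain b0 b1 b2 t where b: "y = (b0, b1, b2, t)" by (cases y) auto
  obtain z0 z1 z2 u where c: "z = (z0, z1, z2, u)" by (cases z) auto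
  show ?thesis unfolding a b c
    using th_key[of a0 a1 a2 b0 b1 b2 z0 z1 z2] by (simp only: omul.simps prod.inject) argo
qed

lemma OL_simps[simp]: "lcarrier OL = UNIV" "lmult OL = omul" "lone OL = (False, False, False, False)"
  by (simp_all add: OL_def)

interpretation OLp: lp OL by (unfold_locales) (rule OL_loop)

lemma sq_OL[simp]: "lsq OL (a0, a1, a2, s) = (False, False, False, th a0 a1 a2 a0 a1 a2)"
  by (simp add: lsq_def)

lemma cm_OL[simp]: "lcomm OL (a0, a1, a2, s) (b0, b1, b2, t) = (False, False, False, th a0 a1 a2 b0 b1 b2 \<noteq> th b0 b1 b2 a0 a1 a2)"
  by (rule OLp.cm_unique) auto

lemma as_OL[simp]: "lassoc OL (a0, a1, a2, s) (b0, b1, b2, t) (w0, w1, w2, u) =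
   (False, False, False, ((th a0 a1 a2 b0 b1 b2 \<noteq> th (a0 \<noteq> b0) (a1 \<noteq> b1) (a2 \<noteq> b2) w0 w1 w2) \<noteq> th b0 b1 b2 w0 w1 w2) \<noteq> th a0 a1 a2 (b0 \<noteq> w0) (b1 \<noteq> w1) (b2 \<noteq> w2))"
  by (rule OLp.as_unique) auto

lemma OL_inE: "in_E OL"
  unfolding in_E_def is_moufang_def using OL_loop OL_moufang_raw
  by (simp add: split_paired_all split_paired_Ball_Sigma)

definition img_loop :: "('a \<Rightarrow> 'b) \<Rightarrow> 'a loop \<Rightarrow> 'b loop" where
  "img_loop \<phi> L = \<lparr> lcarrier = \<phi> ` lcarrier L,
     lmult = (\<lambda>a b. \<phi> (lmult L (inv_into (lcarrier L) \<phi> a) (inv_into (lcarrier L) \<phi> b))),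
     lone = \<phi> (lone L) \<rparr>"

lemma img_simps: "lcarrier (img_loop \<phi> L) = \<phi> ` lcarrier L"
  "lmult (img_loop \<phi> L) a b = \<phi> (lmult L (inv_into (lcarrier L) \<phi> a) (inv_into (lcarrier L) \<phi> b))"
  "lone (img_loop \<phi> L) = \<phi> (lone L)"
  by (simp_all add: img_loop_def)

lemma img_hom: assumes L: "is_loop L" and inj: "inj_on \<phi> (lcarrier L)"
  shows "loop_hom L (img_loop \<phi> L) \<phi>"
  unfolding loop_hom_def img_simps using inj by (simp add: inv_into_f_f)

lemma img_inv_hom: assumes L: "is_loop L" and inj: "inj_on \<phi> (lcarrier L)"
  shows "loop_hom (img_loop \<phi> L) L (inv_into (lcarrier L) \<phi>)"
proof -
  interpret lp L using L by (simp add: lp_def)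
  show ?thesis unfolding loop_hom_def img_simps using inj by (auto simp: inv_into_f_f inv_into_into)
qed

lemma img_is_loop: assumes L: "is_loop L" and inj: "inj_on \<phi> (lcarrier L)"
  shows "is_loop (img_loop \<phi> L)"
proof -
  interpret lp L using L by (simp add: lp_def)
  let ?K = "img_loop \<phi> L" and ?i = "inv_into G \<phi>"
  have ii: "\<And>x. x \<in> G \<Longrightarrow> ?i (\<phi> x) = x" using inj by (simp add: inv_into_f_f)
  have l: "\<exists>!x. x \<in> lcarrier ?K \<and> lmult ?K a x = b" if a: "a \<in> lcarrier ?K" and b: "b \<in> lcarrier ?K" for a b
  proof -
    obtain u where u: "u \<in> G" "a = \<phi> u" using a unfolding img_simps by auto
    obtain v where v: "v \<in> G" "b = \<phi> v" using b unfolding img_simps by auto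
    show ?thesis
    proof
      show "\<phi> (ld u v) \<in> lcarrier ?K \<and> lmult ?K a (\<phi> (ld u v)) = b" using u v ii unfolding img_simps by simp
      fix y assume y: "y \<in> lcarrier ?K \<and> lmult ?K a y = b"
      then obtain z where z: "z \<in> G" "y = \<phi> z" unfolding img_simps by auto
      have "\<phi> (u \<odot> z) = \<phi> v" using y z u v ii unfolding img_simps by simp
      then have "u \<odot> z = v" using inj u v z by (meson inj_onD mc)
      then show "y = \<phi> (ld u v)" using ld_unique u v z by simp
    qed
  qed
  have r: "\<exists>!x. x \<in> lcarrier ?K \<and> lmult ?K x a = b" if a: "a \<in> lcarrier ?K" and b: "b \<in> lcarrier ?K" for a b
  proof -
    obtain u where u: "u \<in> G" "a = \<phi> u" using a unfolding img_simps by auto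
    obtain v where v: "v \<in> G" "b = \<phi> v" using b unfolding img_simps by auto
    show ?thesis
    proof
      show "\<phi> (rd v u) \<in> lcarrier ?K \<and> lmult ?K (\<phi> (rd v u)) a = b" using u v ii unfolding img_simps by simp
      fix y assume y: "y \<in> lcarrier ?K \<and> lmult ?K y a = b"
      then obtain z where z: "z \<in> G" "y = \<phi> z" unfolding img_simps by auto
      have "\<phi> (z \<odot> u) = \<phi> v" using y z u v ii unfolding img_simps by simp
      then have "z \<odot> u = v" using inj u v z by (meson inj_onD mc)
      then show "y = \<phi> (rd v u)" using rd_unique u v z by simp
    qed
  qed
  show ?thesis unfolding is_loop_def using l r ii unfolding img_simps by auto
qed

lemma iso_inE:
  assumes L: "is_loop L" and K: "is_loop K" and h: "loop_hom L K \<phi>" and sur: "\<phi> ` lcarrier L = lcarrier K"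
    and E: "in_E L"
  shows "in_E K"
proof -
  interpret lp L using L by (simp add: lp_def)
  have pre: "\<And>a. a \<in> lcarrier K \<Longrightarrow> \<exists>x\<in>G. a = \<phi> x" using sur by auto
  have hm: "\<And>x y. x \<in> G \<Longrightarrow> y \<in> G \<Longrightarrow> lmult K (\<phi> x) (\<phi> y) = \<phi> (x \<odot> y)" using hom_mult[OF h] by simp
  have hc: "\<And>x y. x \<in> G \<Longrightarrow> y \<in> G \<Longrightarrow> lcomm K (\<phi> x) (\<phi> y) = \<phi> (cm x y)" using hom_cm[OF L K h] by simp
  have ha: "\<And>x y z. x \<in> G \<Longrightarrow> y \<in> G \<Longrightarrow> z \<in> G \<Longrightarrow> lassoc K (\<phi> x) (\<phi> y) (\<phi> z) = \<phi> (as x y z)"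
    using hom_as[OF L K h] by simp
  have hs: "\<And>x. x \<in> G \<Longrightarrow> lsq K (\<phi> x) = \<phi> (sq x)" using hom_sq[OF h] by simp
  have h1: "lone K = \<phi> e" using hom_one[OF h] by simp
  have mf: "\<And>x y z. x \<in> G \<Longrightarrow> y \<in> G \<Longrightarrow> z \<in> G \<Longrightarrow> ((x \<odot> y) \<odot> x) \<odot> z = x \<odot> (y \<odot> (x \<odot> z))"
    using E unfolding in_E_def is_moufang_def by blast
  have Eax: "\<And>x y z t s. x \<in> G \<Longrightarrow> y \<in> G \<Longrightarrow> z \<in> G \<Longrightarrow> t \<in> G \<Longrightarrow> s \<in> G \<Longrightarrow>
       sq x \<odot> sq x = e \<and> sq (cm x y) = e \<and> sq (as x y z) = e \<and> cm (sq x) y = e \<and>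
       cm (cm x y) t = e \<and> cm (as x y z) t = e \<and> as (sq x) y z = e \<and> as (cm x y) z t = e \<and>
       as (as x y z) t s = e"
    using E unfolding in_E_def by blast
  have moufK: "is_moufang K"
    unfolding is_moufang_def
  proof (intro conjI K ballI)
    fix a b c assume abc: "a \<in> lcarrier K" "b \<in> lcarrier K" "c \<in> lcarrier K"
    then obtain x y z where xyz: "x \<in> G" "y \<in> G" "z \<in> G" "a = \<phi> x" "b = \<phi> y" "c = \<phi> z" using pre by metis
    show "lmult K (lmult K (lmult K a b) a) c = lmult K a (lmult K b (lmult K a c))"
      using xyz hm mf by simp
  qed
  show ?thesis unfolding in_E_def
  proof (intro conjI moufK ballI)
    fix a b c d f assume abc: "a \<in> lcarrier K" "b \<in> lcarrier K" "c \<in> lcarrier K" "d \<in> lcarrier K" "f \<in> lcarrier K"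
    then obtain x y z t s where xyz: "x \<in> G" "y \<in> G" "z \<in> G" "t \<in> G" "s \<in> G"
      "a = \<phi> x" "b = \<phi> y" "c = \<phi> z" "d = \<phi> t" "f = \<phi> s" using pre by metis
    note E5 = Eax[OF xyz(1-5)]
    show "lmult K (lsq K a) (lsq K a) = lone K" using xyz E5 hs hm h1 by simp
    show "lsq K (lcomm K a b) = lone K" using xyz E5 hs hc h1 by simp
    show "lsq K (lassoc K a b c) = lone K" using xyz E5 hs ha h1 by simp
    show "lcomm K (lsq K a) b = lone K" using xyz E5 hs hc h1 by simp
    show "lcomm K (lcomm K a b) d = lone K" using xyz E5 hc h1 by simp
    show "lcomm K (lassoc K a b c) d = lone K" using xyz E5 hc ha h1 by simp
    show "lassoc K (lsq K a) b c = lone K" using xyz E5 hs ha h1 by simp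
    show "lassoc K (lcomm K a b) c d = lone K" using xyz E5 hc ha h1 by simp
    show "lassoc K (lassoc K a b c) d f = lone K" using xyz E5 ha h1 by simp
  qed
qed

lemma img_inE: assumes L: "is_loop L" and inj: "inj_on \<phi> (lcarrier L)" and E: "in_E L"
  shows "in_E (img_loop \<phi> L)"
  by (rule iso_inE[OF L img_is_loop[OF L inj] img_hom[OF L inj]]) (simp_all add: img_simps E)

datatype tm = TG nat | TO | TM tm tm | TL tm tm | TR tm tm

instance tm :: countable by countable_datatype

primrec ev :: "'a loop \<Rightarrow> (nat \<Rightarrow> 'a) \<Rightarrow> tm \<Rightarrow> 'a" where
  "ev L k (TG i) = k i"
| "ev L k TO = lone L"
| "ev L k (TM a b) = lmult L (ev L k a) (ev L k b)"
| "ev L k (TL a b) = lldiv L (ev L k a) (ev L k b)"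
| "ev L k (TR a b) = lrdiv L (ev L k a) (ev L k b)"

lemma lgen_countable: "countable (lgen L (k ` (A :: nat set)))"
proof -
  have "lgen L (k ` A) \<subseteq> range (ev L k)"
  proof
    fix w assume "w \<in> lgen L (k ` A)"
    then show "w \<in> range (ev L k)"
    proof (induction rule: lgen.induct)
      case (gen_base x) then obtain i where "x = k i" by auto
      then show ?case by (metis ev.simps(1) rangeI)
    next
      case gen_one then show ?case by (metis ev.simps(2) rangeI)
    next
      case (gen_mult x y) then obtain a b where "x = ev L k a" "y = ev L k b" by auto
      then show ?case by (metis ev.simps(3) rangeI)
    next
      case (gen_ldiv x y) then obtain a b where "x = ev L k a" "y = ev L k b" by auto
      then show ?case by (metis ev.simps(4) rangeI)
    next
      case (gen_rdiv x y) then obtain a b where "x = ev L k a" "y = ev L k b" by auto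
      then show ?case by (metis ev.simps(5) rangeI)
    qed
  qed
  then show ?thesis by (rule countable_subset) simp
qed

lemma hom_comp: "loop_hom A B f \<Longrightarrow> loop_hom B C g \<Longrightarrow> loop_hom A C (\<lambda>x. g (f x))"
  unfolding loop_hom_def by auto

lemma inE_loop: "in_E L \<Longrightarrow> is_loop L"
  unfolding in_E_def is_moufang_def by blast

lemma inE_eloop: "in_E L \<Longrightarrow> eloop L"
  using inE_loop by (simp add: eloop_def eloop_axioms_def lp_def)

definition On :: "nat loop" where "On = img_loop to_nat OL"

definition oq1 :: ob where "oq1 = (True, False, False, False)"
definition oq2 :: ob where "oq2 = (False, True, False, False)"
definition oq3 :: ob where "oq3 = (False, False, True, False)"

lemma inj_tn: "inj_on (to_nat :: ob \<Rightarrow> nat) (lcarrier OL)"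
  by (simp add: inj_on_def)

lemma On_loop: "is_loop On" unfolding On_def by (rule img_is_loop[OF OL_loop inj_tn])
lemma On_inE: "in_E On" unfolding On_def by (rule img_inE[OF OL_loop inj_tn OL_inE])
lemma tn_hom: "loop_hom OL On to_nat" unfolding On_def by (rule img_hom[OF OL_loop inj_tn])
lemma On_carrier: "lcarrier On = range (to_nat :: ob \<Rightarrow> nat)" unfolding On_def img_simps by simp
lemma On_one: "lone On = to_nat (lone OL)" using hom_one[OF tn_hom] by simp

lemma On_facts:
  "to_nat oq1 \<noteq> lone On"
  "lmult On (to_nat oq1) (lsq On (to_nat oq1)) \<noteq> lone On"
  "lsq On (to_nat oq1) \<noteq> lone On"
  "lcomm On (to_nat oq1) (to_nat oq2) \<noteq> lone On"
  "lassoc On (to_nat oq1) (to_nat oq2) (to_nat oq3) \<noteq> lone On"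
  "to_nat oq2 \<noteq> lone On" "to_nat oq3 \<noteq> lone On"
  "to_nat oq1 \<noteq> to_nat oq2" "to_nat oq1 \<noteq> to_nat oq3" "to_nat oq2 \<noteq> to_nat oq3"
proof -
  have sq: "lsq On (to_nat a) = to_nat (lsq OL a)" for a using hom_sq[OF tn_hom] by simp
  have cm: "lcomm On (to_nat a) (to_nat b) = to_nat (lcomm OL a b)" for a b
    using hom_cm[OF OL_loop On_loop tn_hom] by simp
  have as: "lassoc On (to_nat a) (to_nat b) (to_nat c) = to_nat (lassoc OL a b c)" for a b c
    using hom_as[OF OL_loop On_loop tn_hom] by simp
  have mu: "lmult On (to_nat a) (to_nat b) = to_nat (lmult OL a b)" for a b
    using hom_mult[OF tn_hom] by simp
  show "to_nat oq1 \<noteq> lone On"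
    "lmult On (to_nat oq1) (lsq On (to_nat oq1)) \<noteq> lone On"
    "lsq On (to_nat oq1) \<noteq> lone On"
    "lcomm On (to_nat oq1) (to_nat oq2) \<noteq> lone On"
    "lassoc On (to_nat oq1) (to_nat oq2) (to_nat oq3) \<noteq> lone On"
    "to_nat oq2 \<noteq> lone On" "to_nat oq3 \<noteq> lone On"
    "to_nat oq1 \<noteq> to_nat oq2" "to_nat oq1 \<noteq> to_nat oq3" "to_nat oq2 \<noteq> to_nat oq3"
    unfolding On_one sq cm as mu by (simp_all add: oq1_def oq2_def oq3_def th_def)
qed

theorem lemma4p1:
  fixes n :: nat and F :: "'a loop" and g :: "nat \<Rightarrow> 'a"
    and M :: "'b loop" and k :: "nat \<Rightarrow> 'b"
  assumes "n \<ge> 3"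
    and "free_E_loop n F g"
    and "free_E_loop 3 M k"
  shows "\<exists>(I :: ('a \<Rightarrow> 'b) set) \<phi>.
           loop_hom F (prod_loop I M) \<phi> \<and> inj_on \<phi> (lcarrier F)"
proof -
  have FE: "in_E F" and gF: "\<And>i. i < n \<Longrightarrow> g i \<in> lcarrier F" and genF: "lgen F (g ` {..<n}) = lcarrier F"
    and univF: "\<And>(L :: nat loop) f. in_E L \<Longrightarrow> (\<forall>i<n. f i \<in> lcarrier L) \<Longrightarrow> \<exists>h. loop_hom F L h \<and> (\<forall>i<n. h (g i) = f i)"
    using assms(2) unfolding free_E_loop_def by blast+
  have ME: "in_E M" and kM: "\<And>i. i < 3 \<Longrightarrow> k i \<in> lcarrier M" and genM: "lgen M (k ` {..<3}) = lcarrier M"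
    and univM: "\<And>(L :: nat loop) f. in_E L \<Longrightarrow> (\<forall>i<3. f i \<in> lcarrier L) \<Longrightarrow> \<exists>h. loop_hom M L h \<and> (\<forall>i<3. h (k i) = f i)"
    using assms(3) unfolding free_E_loop_def by blast+
  have FL: "is_loop F" using FE by (rule inE_loop)
  have Mlp: "is_loop M" using ME by (rule inE_loop)
  interpret egen F n g
    using FL FE gF by (simp add: egen_def egen_axioms_def eloop_def eloop_axioms_def lp_def)
  have cM: "countable (lcarrier M)" using lgen_countable[of M k "{..<3}"] genM by simp
  then obtain \<phi> :: "'b \<Rightarrow> nat" where phi: "inj_on \<phi> (lcarrier M)" unfolding countable_def by blast
  define M' where "M' = img_loop \<phi> M"
  have M'E: "in_E M'" unfolding M'_def by (rule img_inE[OF Mlp phi ME])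
  have M'c: "lcarrier M' = \<phi> ` lcarrier M" unfolding M'_def img_simps by simp
  define pinv where "pinv = inv_into (lcarrier M) \<phi>"
  have pinv_hom: "loop_hom M' M pinv" unfolding M'_def pinv_def by (rule img_inv_hom[OF Mlp phi])
  have pinv_phi: "\<And>y. y \<in> lcarrier M \<Longrightarrow> pinv (\<phi> y) = y" unfolding pinv_def using phi by (simp add: inv_into_f_f)
  define q1 where "q1 = to_nat oq1"
  define q2 where "q2 = to_nat oq2"
  define q3 where "q3 = to_nat oq3"
  have qOn: "q1 \<in> lcarrier On" "q2 \<in> lcarrier On" "q3 \<in> lcarrier On" unfolding q1_def q2_def q3_def On_carrier by auto
  have qall: "\<forall>i<3. (if i = 0 then q1 else if i = 1 then q2 else q3) \<in> lcarrier On" using qOn by auto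
  obtain \<psi> where psi: "loop_hom M On \<psi>" "\<forall>i<3. \<psi> (k i) = (if i = 0 then q1 else if i = 1 then q2 else q3)"
    using univM[OF On_inE qall] by blast
  have psik: "\<psi> (k 0) = q1" "\<psi> (k 1) = q2" "\<psi> (k 2) = q3" using psi(2) by auto
  define I where "I = {h. loop_hom F M h}"
  define \<Phi> where "\<Phi> = (\<lambda>x. \<lambda>h\<in>I. h x)"
  have homP: "loop_hom F (prod_loop I M) \<Phi>"
    unfolding loop_hom_def prod_loop_def \<Phi>_def
  proof (intro conjI ballI)
    fix x assume x: "x \<in> lcarrier F"
    show "(\<lambda>h\<in>I. h x) \<in> lcarrier \<lparr>lcarrier = PiE I (\<lambda>_. lcarrier M), lmult = \<lambda>x y. \<lambda>i\<in>I. lmult M (x i) (y i), lone = \<lambda>i\<in>I. lone M\<rparr>"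
      using x hom_in unfolding I_def by auto
  next
    fix x y assume x: "x \<in> lcarrier F" and y: "y \<in> lcarrier F"
    show "(\<lambda>h\<in>I. h (lmult F x y)) = lmult \<lparr>lcarrier = PiE I (\<lambda>_. lcarrier M), lmult = \<lambda>x y. \<lambda>i\<in>I. lmult M (x i) (y i), lone = \<lambda>i\<in>I. lone M\<rparr> (\<lambda>h\<in>I. h x) (\<lambda>h\<in>I. h y)"
      using x y hom_mult unfolding I_def by (auto intro!: restrict_ext)
  next
    show "(\<lambda>h\<in>I. h (lone F)) = lone \<lparr>lcarrier = PiE I (\<lambda>_. lcarrier M), lmult = \<lambda>x y. \<lambda>i\<in>I. lmult M (x i) (y i), lone = \<lambda>i\<in>I. lone M\<rparr>"
      using hom_one unfolding I_def by (auto intro!: restrict_ext)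
  qed
  have injP: "inj_on \<Phi> (lcarrier F)"
  proof (rule inj_onI)
    fix x y assume x: "x \<in> lcarrier F" and y: "y \<in> lcarrier F" and eq: "\<Phi> x = \<Phi> y"
    have hxy: "h x = h y" if "loop_hom F M h" for h
    proof -
      have "h \<in> I" using that unfolding I_def by simp
      then show ?thesis using fun_cong[OF eq, of h] unfolding \<Phi>_def by simp
    qed
    let ?w = "lldiv F x y"
    have wS: "?w \<in> lgen F (g ` {..<n})" using x y genF by simp
    have "?w = lone F"
    proof (rule separation[OF inE_eloop[OF On_inE] qOn _ _ _ _ _ wS])
      show "q1 \<noteq> lone On" "lmult On q1 (lsq On q1) \<noteq> lone On" "lsq On q1 \<noteq> lone On"
        "lcomm On q1 q2 \<noteq> lone On" "lassoc On q1 q2 q3 \<noteq> lone On"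
        unfolding q1_def q2_def q3_def using On_facts by simp_all
      fix \<sigma> :: "nat \<Rightarrow> nat" assume \<sigma>: "\<And>i. \<sigma> i \<in> {lone On, q1, q2, q3}"
      define f where "f = (\<lambda>i. if \<sigma> i = q1 then k 0 else if \<sigma> i = q2 then k 1 else if \<sigma> i = q3 then k 2 else lone M)"
      have fM: "f i \<in> lcarrier M" for i unfolding f_def using kM lp.one_in[of M] Mlp by (simp add: lp_def)
      obtain h' where h': "loop_hom F M' h'" "\<forall>i<n. h' (g i) = \<phi> (f i)"
        using univF[OF M'E, of "\<lambda>i. \<phi> (f i)"] fM M'c by auto
      define h where "h = (\<lambda>x. pinv (h' x))"
      have hh: "loop_hom F M h" unfolding h_def by (rule hom_comp[OF h'(1) pinv_hom])
      have hg: "\<forall>i<n. h (g i) = f i" using h'(2) pinv_phi fM unfolding h_def by simp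
      define \<tau> where "\<tau> = (\<lambda>x. \<psi> (h x))"
      have th: "loop_hom F On \<tau>" unfolding \<tau>_def by (rule hom_comp[OF hh psi(1)])
      have dist: "q1 \<noteq> q2" "q1 \<noteq> q3" "q2 \<noteq> q3" "q1 \<noteq> lone On" "q2 \<noteq> lone On" "q3 \<noteq> lone On"
        unfolding q1_def q2_def q3_def using On_facts by simp_all
      have tg: "\<forall>i<n. \<tau> (g i) = \<sigma> i"
      proof (intro allI impI)
        fix i assume i: "i < n"
        have "\<tau> (g i) = \<psi> (f i)" using hg i unfolding \<tau>_def by simp
        also have "\<dots> = \<sigma> i" using \<sigma>[of i] dist psik hom_one[OF psi(1)] unfolding f_def by auto
        finally show "\<tau> (g i) = \<sigma> i" .
      qed
      have "\<tau> ?w = \<psi> (lldiv M (h x) (h y))" unfolding \<tau>_def using hom_ld[OF FL Mlp hh x y] by simp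
      also have "\<dots> = \<psi> (lone M)" using hxy[OF hh] lp.ld_unique[of M "h y" "lone M" "h y"] Mlp hom_in[OF hh y]
        lp.rone[of M "h y"] lp.one_in[of M] by (simp add: lp_def)
      also have "\<dots> = lone On" using hom_one[OF psi(1)] .
      finally have "\<tau> ?w = lone On" .
      then show "\<exists>\<tau>. loop_hom F On \<tau> \<and> (\<forall>i<n. \<tau> (g i) = \<sigma> i) \<and> \<tau> ?w = lone On" using th tg by blast
    qed
    then show "x = y" using ld_eq[OF x y] x by simp
  qed
  show ?thesis using homP injP by blast
qed

end
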